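(* Let $n\ge m\ge0$, let $\alpha,\beta$ be non-decreasing sequences of rational numbers with $\alpha_1=0$ and $(\alpha,\beta)$ non-resonant. Then the $\mathscr{D}_S$-module $\mathcal{H}^{n+m-1}_{\mathrm{dR}}(U/S,f)^{(G,\tilde\chi\times\rho)}$ (with its Gauss–Manin connection) admits as a cyclic vector the cohomology class of $$\omega=\prod_{i=2}^nx_i^{a_i}\prod_{j=1}^my_j^{-b_j}\,\frac{dx_2}{x_2}\wedge\cdots\wedge\frac{dx_n}{x_n}\wedge\frac{dy_1}{y_1}\wedge\cdots\wedge\frac{dy_m}{y_m}.$$
   Context: Varieties over $\mathbb{C}$. Non-resonant: $\alpha_i-\beta_j\notin\mathbb{Z}$ for all $i,j$. $S=\mathbb{G}_m\setminus\{1\}$ if $n=m$, $S=\mathbb{G}_m$ if $n>m$, coordinate $z$. $d\ge1$ common denominator of the $\alpha_i,\beta_j$, $a_i=d\alpha_i$, $b_j=d\beta_j$. $U=S\times\mathbb{G}_m^{n+m-1}$ with coordinates $(z,x_2,\dots,x_n,y_1,\dots,y_m)$, $\mathrm{pr}_z:U\to S$, $f=\sum_{i=2}^nx_i^d-\sum_jy_j^d+z\prod_jy_j^d/\prod_{i\ge2}x_i^d$. $\mathcal{H}^{n+m-1}_{\mathrm{dR}}(U/S,f)$ is the $(n+m-1)$-st cohomology of the relative twisted de Rham complex $(\Omega^\bullet_{U/S},d+df)$, with Gauss–Manin connection $D=\nabla_{z\partial_z}$, $\nabla_{z\partial_z}[g\eta]=[(z\partial_zg+z\partial_z(f)g)\eta]$.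 $G=\mu_d^{n+m-1}$ acts by multiplication on $x_2,\dots,x_n,y_1,\dots,y_m$ and by pullback on cohomology; $(G,\tilde\chi\times\rho)$ is the isotypic component on which $(\zeta_2,\dots,\zeta_n,\xi_1,\dots,\xi_m)$ acts by $\prod\zeta_i^{a_i}\prod\xi_j^{-b_j}$. A cyclic vector is a section $v$ such that $v,Dv,\dots$ generate the module over $\mathcal{O}_S$. *)

theory Defs
  imports "HOL-Library.Poly_Mapping" "HOL-Computational_Algebra.Polynomial"
          "HOL-Computational_Algebra.Computational_Algebra" "HOL-Computational_Algebra.Field_as_Ring"
begin

text \<open>Variables of the fibre torus: Inl i is x_i (2 \<le> i \<le> n), Inr j is y_j (1 \<le> j \<le> m).
  Exponent vectors are finitely supported integer vectors; regular functions on U are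
  Laurent polynomials in these variables with coefficients in O(S), where O(S) is
  realised inside the rational function field C(z) = complex poly fract.\<close>

type_synonym var = "nat + nat"
type_synonym coef = "complex poly fract"
type_synonym lpoly = "(var \<Rightarrow>\<^sub>0 int) \<Rightarrow>\<^sub>0 coef"

definition fvars :: "nat \<Rightarrow> nat \<Rightarrow> var set" where
  "fvars n m = Inl ` {2..n} \<union> Inr ` {1..m}"

definition zc :: coef where "zc = Fract [:0, 1:] 1"
definition cst :: "complex \<Rightarrow> coef" where "cst c = Fract [:c:] 1"

text \<open>O(S): S = G_m minus {1} if n = m, S = G_m if n > m.\<close>
definition OS :: "nat \<Rightarrow> nat \<Rightarrow> coef set" where
  "OS n m = {Fract p (monom 1 a * [:1, -1:] ^ b) | p a b. n = m \<or> b = 0}"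

text \<open>Regular functions on U = S \<times> G_m^(n+m-1).\<close>
definition OU :: "nat \<Rightarrow> nat \<Rightarrow> lpoly set" where
  "OU n m = {g. (\<forall>e \<in> Poly_Mapping.keys g. \<forall>v. Poly_Mapping.lookup e v \<noteq> 0 \<longrightarrow> v \<in> fvars n m)
               \<and> (\<forall>e. Poly_Mapping.lookup g e \<in> OS n m)}"

text \<open>The derivation z d/dz on C(z), via the normalised representative.\<close>
definition zD :: "coef \<Rightarrow> coef" where
  "zD q = (case quot_of_fract q of (p, r) \<Rightarrow>
     Fract (pCons 0 (pderiv p * r - p * pderiv r)) (r * r))"

definition zDL :: "lpoly \<Rightarrow> lpoly" where "zDL g = Poly_Mapping.map zD g"

definition theta :: "var \<Rightarrow> lpoly \<Rightarrow> lpoly" where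
  "theta v g = Poly_Mapping.mapp (\<lambda>e c. of_int (Poly_Mapping.lookup e v) * c) g"

definition scal :: "coef \<Rightarrow> lpoly \<Rightarrow> lpoly" where
  "scal c g = Poly_Mapping.single 0 c * g"

definition fpot :: "nat \<Rightarrow> nat \<Rightarrow> nat \<Rightarrow> lpoly" where
  "fpot n m d =
     (\<Sum>i\<in>{2..n}. Poly_Mapping.single (Poly_Mapping.single (Inl i) (int d)) 1)
   - (\<Sum>j\<in>{1..m}. Poly_Mapping.single (Poly_Mapping.single (Inr j) (int d)) 1)
   + Poly_Mapping.single
       ((\<Sum>j\<in>{1..m}. Poly_Mapping.single (Inr j) (int d))
        - (\<Sum>i\<in>{2..n}. Poly_Mapping.single (Inl i) (int d))) zc"

text \<open>Top-degree relative forms are g \<cdot> dx_2/x_2 \<and> ... \<and> dy_m/y_m, identified with g.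
  The image of d + df from degree n+m-2 consists of sums over the variables v of
  (x_v d/dx_v + x_v d/dx_v f) h_v.\<close>
definition exact_top :: "nat \<Rightarrow> nat \<Rightarrow> nat \<Rightarrow> lpoly set" where
  "exact_top n m d = {\<Sum>v\<in>fvars n m. theta v (h v) + theta v (fpot n m d) * h v
                       | h. \<forall>v\<in>fvars n m. h v \<in> OU n m}"

definition GM :: "nat \<Rightarrow> nat \<Rightarrow> nat \<Rightarrow> lpoly \<Rightarrow> lpoly" where
  "GM n m d g = zDL g + zDL (fpot n m d) * g"

text \<open>Pullback along multiplication by zeta \<in> mu_d^(n+m-1) (the dlog volume form is invariant).\<close>
definition gact :: "nat \<Rightarrow> nat \<Rightarrow> (var \<Rightarrow> complex) \<Rightarrow> lpoly \<Rightarrow> lpoly" where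
  "gact n m \<zeta> g = Poly_Mapping.mapp
     (\<lambda>e c. cst (\<Prod>v\<in>fvars n m. \<zeta> v powi Poly_Mapping.lookup e v) * c) g"

definition Gset :: "nat \<Rightarrow> nat \<Rightarrow> nat \<Rightarrow> (var \<Rightarrow> complex) set" where
  "Gset n m d = {\<zeta>. \<forall>v\<in>fvars n m. \<zeta> v ^ d = 1}"

text \<open>a_i = d alpha_i, b_j = d beta_j.\<close>
definition intmul :: "nat \<Rightarrow> rat \<Rightarrow> int" where
  "intmul d r = \<lfloor>of_nat d * r\<rfloor>"

definition chi :: "nat \<Rightarrow> nat \<Rightarrow> nat \<Rightarrow> (nat \<Rightarrow> rat) \<Rightarrow> (nat \<Rightarrow> rat)
                      \<Rightarrow> (var \<Rightarrow> complex) \<Rightarrow> complex" where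
  "chi n m d \<alpha> \<beta> \<zeta> = (\<Prod>i\<in>{2..n}. \<zeta> (Inl i) powi intmul d (\<alpha> i))
                      * (\<Prod>j\<in>{1..m}. \<zeta> (Inr j) powi (- intmul d (\<beta> j)))"

text \<open>Representatives of classes in the (G, chi~ \<times> rho)-isotypic component of
  H^{n+m-1}_dR(U/S, f): top forms whose class satisfies zeta^* [g] = chi(zeta) [g].\<close>
definition isotypic :: "nat \<Rightarrow> nat \<Rightarrow> nat \<Rightarrow> (nat \<Rightarrow> rat) \<Rightarrow> (nat \<Rightarrow> rat) \<Rightarrow> lpoly set" where
  "isotypic n m d \<alpha> \<beta> = {g \<in> OU n m. \<forall>\<zeta>\<in>Gset n m d.
       gact n m \<zeta> g - scal (cst (chi n m d \<alpha> \<beta> \<zeta>)) g \<in> exact_top n m d}"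

definition omega :: "nat \<Rightarrow> nat \<Rightarrow> nat \<Rightarrow> (nat \<Rightarrow> rat) \<Rightarrow> (nat \<Rightarrow> rat) \<Rightarrow> lpoly" where
  "omega n m d \<alpha> \<beta> = Poly_Mapping.single
     ((\<Sum>i\<in>{2..n}. Poly_Mapping.single (Inl i) (intmul d (\<alpha> i)))
      + (\<Sum>j\<in>{1..m}. Poly_Mapping.single (Inr j) (- intmul d (\<beta> j)))) 1"

definition cyclic_vector :: "nat \<Rightarrow> nat \<Rightarrow> nat \<Rightarrow> (nat \<Rightarrow> rat) \<Rightarrow> (nat \<Rightarrow> rat) \<Rightarrow> lpoly \<Rightarrow> bool" where
  "cyclic_vector n m d \<alpha> \<beta> w \<longleftrightarrow> w \<in> isotypic n m d \<alpha> \<beta> \<and>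
     (\<forall>g\<in>isotypic n m d \<alpha> \<beta>. \<exists>K c. (\<forall>k\<le>K. c k \<in> OS n m) \<and>
        g - (\<Sum>k\<le>K. scal (c k) ((GM n m d ^^ k) w)) \<in> exact_top n m d)"

end

theory Submission
  imports Defs "HOL-Analysis.Complex_Transcendental"
begin

lemma zD_key:
  fixes p r p0 r0 :: "complex poly"
  assumes h: "p0 * r = p * r0"
  shows "(pderiv p * r - p * pderiv r) * (r0 * r0) = (pderiv p0 * r0 - p0 * pderiv r0) * (r * r)"
proof -
  have d: "pderiv p0 * r + p0 * pderiv r = pderiv p * r0 + p * pderiv r0"
    using arg_cong[OF h, of pderiv] by (simp add: pderiv_mult algebra_simps)
  show ?thesis using h d by algebra
qed

lemma zD_Fract:
  assumes "r \<noteq> 0"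
  shows "zD (Fract p r) = Fract (pCons 0 (pderiv p * r - p * pderiv r)) (r * r)"
proof -
  obtain p0 r0 where q: "quot_of_fract (Fract p r) = (p0, r0)" by (cases "quot_of_fract (Fract p r)")
  have r0: "r0 \<noteq> 0" using snd_quot_of_fract_nonzero[of "Fract p r"] q by simp
  have "Fract p0 r0 = Fract p r" using Fract_quot_of_fract[of "Fract p r"] q by simp
  hence h: "p0 * r = p * r0" using r0 assms by (simp add: eq_fract)
  have "zD (Fract p r) = Fract (pCons 0 (pderiv p0 * r0 - p0 * pderiv r0)) (r0 * r0)"
    unfolding zD_def q by simp
  also have "... = Fract (pCons 0 (pderiv p * r - p * pderiv r)) (r * r)"
    using r0 assms zD_key[OF h]
    by (simp add: eq_fract mult_pCons_left)
  finally show ?thesis .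
qed

lemma zD_add: "zD (a + b) = zD a + zD b"
proof (cases a)
  case (Fract p r)
  show ?thesis
  proof (cases b)
    case (Fract p' r')
    have "zD (a + b) = Fract (pCons 0 (pderiv (p * r' + p' * r) * (r * r') - (p * r' + p' * r) * pderiv (r * r'))) (r * r' * (r * r'))"
      using Fract \<open>a = _\<close> \<open>r \<noteq> 0\<close> by (simp add: zD_Fract)
    also have "... = zD a + zD b"
      using Fract \<open>a = _\<close> \<open>r \<noteq> 0\<close> 
      by (simp add: zD_Fract eq_fract mult_pCons_left pderiv_mult pderiv_add algebra_simps)
    finally show ?thesis .
  qed
qed

lemma zD_0 [simp]: "zD 0 = 0"
  unfolding zD_def quot_of_fract_0 by (simp add: Zero_fract_def)



lemma zD_Fract1: "zD (Fract p 1) = Fract (pCons 0 (pderiv p)) 1"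
  by (simp add: zD_Fract)

lemma lookup_zDL: "Poly_Mapping.lookup (zDL g) e = zD (Poly_Mapping.lookup g e)"
  by (simp add: zDL_def Poly_Mapping.map.rep_eq when_def)

lemma zDL_add: "zDL (a + b) = zDL a + zDL b"
  by (rule poly_mapping_eqI) (simp add: lookup_zDL lookup_add zD_add)

lemma zD_uminus: "zD (- a) = - zD a"
proof -
  have "zD a + zD (- a) = 0" using zD_add[of a "-a"] by simp
  then show ?thesis by (simp add: eq_neg_iff_add_eq_0 add.commute)
qed

lemma zD_diff: "zD (a - b) = zD a - zD b"
  using zD_add[of a "-b"] zD_uminus[of b] by simp

lemma zDL_diff: "zDL (a - b) = zDL a - zDL b"
  by (rule poly_mapping_eqI) (simp add: lookup_zDL lookup_minus zD_diff)

lemma zDL_0 [simp]: "zDL 0 = 0"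
  by (rule poly_mapping_eqI) (simp add: lookup_zDL)

lemma zDL_sum: "zDL (\<Sum>x\<in>A. f x) = (\<Sum>x\<in>A. zDL (f x))"
  by (induction A rule: infinite_finite_induct) (auto simp: zDL_add)

lemma zDL_single: "zDL (Poly_Mapping.single k a) = Poly_Mapping.single k (zD a)"
  by (rule poly_mapping_eqI) (simp add: lookup_zDL lookup_single when_def)

lemma zD_1 [simp]: "zD 1 = 0"
  using zD_Fract1[of 1] by (simp add: fract_collapse)

lemma zD_zc [simp]: "zD zc = zc"
  by (simp add: zc_def zD_Fract1 pderiv_pCons)

lemma zc_mult_Fract: "zc * Fract p 1 = Fract (pCons 0 p) 1"
  by (simp add: zc_def)

lemma cst_mult: "cst a * cst b = cst (a * b)" by (simp add: cst_def mult.commute)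
lemma cst_add: "cst a + cst b = cst (a + b)" by (simp add: cst_def)
lemma cst_diff: "cst a - cst b = cst (a - b)" by (simp add: cst_def)
lemma cst_1 [simp]: "cst 1 = 1" by (simp add: cst_def One_fract_def one_pCons)
lemma cst_0 [simp]: "cst 0 = 0" by (simp add: cst_def fract_collapse)
lemma cst_uminus: "cst (- a) = - cst a" by (simp add: cst_def)
lemma cst_of_nat: "cst (of_nat k) = of_nat k"
  by (simp add: cst_def of_nat_fract of_nat_poly)
lemma cst_of_int: "cst (of_int k) = of_int k"
proof (cases k rule: int_cases)
  case (nonneg n) then show ?thesis using cst_of_nat[of n] by simp
next
  case (neg n) then show ?thesis using cst_of_nat[of "Suc n"] cst_uminus[of "of_nat (Suc n)"]
    by (simp del: of_nat_Suc)
qed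
lemma cst_inv: "c \<noteq> 0 \<Longrightarrow> cst c * cst (1 / c) = 1"
  by (simp add: cst_mult)

lemma OS_I: "n = m \<or> b = 0 \<Longrightarrow> Fract p (monom 1 a * [:1, -1:] ^ b) \<in> OS n m"
  unfolding OS_def by blast

lemma OS_E:
  assumes "x \<in> OS n m"
  obtains p a b where "n = m \<or> b = 0" "x = Fract p (monom 1 a * [:1, -1:] ^ b)"
  using assms unfolding OS_def by blast

lemma den_nz: "monom (1::complex) a * [:1, -1:] ^ b \<noteq> 0"
  by simp

lemma OS_poly: "Fract p 1 \<in> OS n m"
  using OS_I[of n m 0 p 0] by (simp add: monom_0 one_pCons)

lemma OS_0 [simp]: "0 \<in> OS n m" using OS_poly[of 0] by (simp add: Zero_fract_def)
lemma OS_1 [simp]: "1 \<in> OS n m" using OS_poly[of 1] by (simp add: One_fract_def)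
lemma OS_cst [simp]: "cst c \<in> OS n m" unfolding cst_def by (rule OS_poly)
lemma OS_zc [simp]: "zc \<in> OS n m" unfolding zc_def by (rule OS_poly)
lemma OS_of_int [simp]: "of_int k \<in> OS n m" using OS_cst[of "of_int k"] by (simp add: cst_of_int)

lemma OS_inv_zpow: "Fract 1 (monom 1 t) \<in> OS n m"
  using OS_I[of n m 0 1 t] by simp

lemma monom_mult_den: "monom (1::complex) a * [:1, -1:] ^ b * (monom 1 a' * [:1, -1:] ^ b')
   = monom 1 (a + a') * [:1, -1:] ^ (b + b')"
  by (simp add: mult_monom power_add algebra_simps)

lemma OS_mult: assumes "x \<in> OS n m" "y \<in> OS n m" shows "x * y \<in> OS n m"
proof -
  obtain p a b where 1: "n = m \<or> b = 0" "x = Fract p (monom 1 a * [:1, -1:] ^ b)" using assms(1) by (rule OS_E)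
  obtain p' a' b' where 2: "n = m \<or> b' = 0" "y = Fract p' (monom 1 a' * [:1, -1:] ^ b')" using assms(2) by (rule OS_E)
  have "x * y = Fract (p * p') (monom 1 (a + a') * [:1, -1:] ^ (b + b'))"
    using 1 2 by (simp add: monom_mult_den)
  then show ?thesis using 1 2 OS_I[of n m "b + b'"] by auto
qed

lemma OS_add: assumes "x \<in> OS n m" "y \<in> OS n m" shows "x + y \<in> OS n m"
proof -
  obtain p a b where 1: "n = m \<or> b = 0" "x = Fract p (monom 1 a * [:1, -1:] ^ b)" using assms(1) by (rule OS_E)
  obtain p' a' b' where 2: "n = m \<or> b' = 0" "y = Fract p' (monom 1 a' * [:1, -1:] ^ b')" using assms(2) by (rule OS_E)
  have "x + y = Fract (p * (monom 1 a' * [:1, -1:] ^ b') + p' * (monom 1 a * [:1, -1:] ^ b)) (monom 1 (a + a') * [:1, -1:] ^ (b + b'))"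
    using 1 2 by (simp add: monom_mult_den den_nz)
  then show ?thesis using 1 2 OS_I[of n m "b + b'"] by auto
qed

lemma OS_uminus: "x \<in> OS n m \<Longrightarrow> - x \<in> OS n m"
  using OS_mult[of "-1" n m x] OS_of_int[of "-1" n m] by simp

lemma OS_diff: "x \<in> OS n m \<Longrightarrow> y \<in> OS n m \<Longrightarrow> x - y \<in> OS n m"
  using OS_add[of x n m "-y"] OS_uminus by simp

abbreviation lk where "lk \<equiv> Poly_Mapping.lookup"
abbreviation sg where "sg \<equiv> Poly_Mapping.single"

lemma lookup_theta: "lk (theta v g) e = of_int (lk e v) * lk g e"
  by (simp add: theta_def lookup_mapp when_def in_keys_iff)

lemma theta_add: "theta v (a + b) = theta v a + theta v b"
  by (rule poly_mapping_eqI) (simp add: lookup_theta lookup_add algebra_simps)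
lemma theta_diff: "theta v (a - b) = theta v a - theta v b"
  by (rule poly_mapping_eqI) (simp add: lookup_theta lookup_minus algebra_simps)
lemma theta_0 [simp]: "theta v 0 = 0"
  by (rule poly_mapping_eqI) (simp add: lookup_theta)
lemma theta_sum: "theta v (\<Sum>x\<in>A. f x) = (\<Sum>x\<in>A. theta v (f x))"
  by (induction A rule: infinite_finite_induct) (auto simp: theta_add)
lemma theta_single: "theta v (sg e a) = sg e (of_int (lk e v) * a)"
  by (rule poly_mapping_eqI) (simp add: lookup_theta lookup_single when_def)

lemma lookup_scal: "lk (scal c g) e = c * lk g e"
  by (simp add: scal_def mult_map_scale_conv_mult[symmetric] Poly_Mapping.map.rep_eq when_def)

lemma scal_add: "scal c (a + b) = scal c a + scal c b"
  by (simp add: scal_def distrib_left)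
lemma scal_diff: "scal c (a - b) = scal c a - scal c b"
  by (simp add: scal_def right_diff_distrib)
lemma scal_sum: "scal c (\<Sum>x\<in>A. f x) = (\<Sum>x\<in>A. scal c (f x))"
  by (simp add: scal_def sum_distrib_left)
lemma scal_scal: "scal c (scal c' g) = scal (c * c') g"
  by (simp add: scal_def mult.assoc[symmetric] mult_single)
lemma scal_1 [simp]: "scal 1 g = g"
  by (simp add: scal_def)
lemma scal_0 [simp]: "scal 0 g = 0"
  by (simp add: scal_def)
lemma scal_zero [simp]: "scal c 0 = 0"
  by (simp add: scal_def)
lemma scal_single: "scal c (sg e a) = sg e (c * a)"
  by (simp add: scal_def mult_single)
lemma scal_mult: "scal c (a * b) = a * scal c b"
  by (simp add: scal_def algebra_simps)
lemma scal_add_left: "scal (c + c') g = scal c g + scal c' g"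
  by (simp add: scal_def single_add distrib_right)
lemma scal_uminus: "scal (- 1) g = - g"
  by (simp add: scal_def single_uminus)
lemma theta_scal: "theta v (scal c g) = scal c (theta v g)"
  by (rule poly_mapping_eqI) (simp add: lookup_theta lookup_scal algebra_simps)

lemma lookup_gact: "lk (gact n m z g) e = cst (\<Prod>v\<in>fvars n m. z v powi lk e v) * lk g e"
  by (simp add: gact_def lookup_mapp when_def in_keys_iff)

lemma gact_single: "gact n m z (sg e a) = sg e (cst (\<Prod>v\<in>fvars n m. z v powi lk e v) * a)"
  by (rule poly_mapping_eqI) (simp add: lookup_gact lookup_single when_def)

lemma monomial_sum: "g = (\<Sum>e\<in>Poly_Mapping.keys g. sg e (lk g e))"
proof (rule poly_mapping_eqI)
  fix k
  show "lk g k = lk (\<Sum>e\<in>Poly_Mapping.keys g. sg e (lk g e)) k"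
  proof (cases "k \<in> Poly_Mapping.keys g")
    case True
    then show ?thesis by (simp add: lookup_sum lookup_single when_def)
  next
    case False
    then have "lk g k = 0" by (simp add: in_keys_iff)
    moreover have "lk (\<Sum>e\<in>Poly_Mapping.keys g. sg e (lk g e)) k = 0"
      using False by (auto simp: lookup_sum lookup_single when_def intro!: sum.neutral)
    ultimately show ?thesis by simp
  qed
qed

definition Pf :: "((var \<Rightarrow>\<^sub>0 int) \<Rightarrow> bool) \<Rightarrow> lpoly \<Rightarrow> lpoly" where
  "Pf C g = Abs_poly_mapping (\<lambda>e. if C e then lk g e else 0)"

lemma lookup_Pf: "lk (Pf C g) e = (if C e then lk g e else 0)"
proof -
  have "finite {e. (if C e then lk g e else 0) \<noteq> 0}"
    by (rule finite_subset[of _ "Poly_Mapping.keys g"]) (auto simp: in_keys_iff split: if_splits)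
  then show ?thesis by (simp add: Pf_def)
qed

lemma Pf_add: "Pf C (a + b) = Pf C a + Pf C b"
  by (rule poly_mapping_eqI) (simp add: lookup_Pf lookup_add)
lemma Pf_diff: "Pf C (a - b) = Pf C a - Pf C b"
  by (rule poly_mapping_eqI) (simp add: lookup_Pf lookup_minus)
lemma Pf_0 [simp]: "Pf C 0 = 0"
  by (rule poly_mapping_eqI) (simp add: lookup_Pf)
lemma Pf_sum: "Pf C (\<Sum>x\<in>A. f x) = (\<Sum>x\<in>A. Pf C (f x))"
  by (induction A rule: infinite_finite_induct) (auto simp: Pf_add)
lemma Pf_single: "Pf C (sg e a) = (if C e then sg e a else 0)"
  by (rule poly_mapping_eqI) (simp add: lookup_Pf lookup_single when_def)
lemma Pf_theta: "Pf C (theta v g) = theta v (Pf C g)"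
  by (rule poly_mapping_eqI) (simp add: lookup_Pf lookup_theta)
lemma Pf_scal: "Pf C (scal c g) = scal c (Pf C g)"
  by (rule poly_mapping_eqI) (simp add: lookup_Pf lookup_scal)
lemma Pf_True: "Pf (\<lambda>_. True) g = g"
  by (rule poly_mapping_eqI) (simp add: lookup_Pf)
lemma Pf_Pf: "Pf C (Pf C' g) = Pf (\<lambda>e. C e \<and> C' e) g"
  by (rule poly_mapping_eqI) (simp add: lookup_Pf)

lemma Pf_mult_single:
  assumes "\<And>e. C (k + e) = C e"
  shows "Pf C (sg k a * h) = sg k a * Pf C h"
proof -
  have "sg k a * h = (\<Sum>e\<in>Poly_Mapping.keys h. sg (k + e) (a * lk h e))"
    by (subst monomial_sum[of h]) (simp add: sum_distrib_left mult_single)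
  then have "Pf C (sg k a * h) = (\<Sum>e\<in>Poly_Mapping.keys h. if C e then sg (k + e) (a * lk h e) else 0)"
    by (simp add: Pf_sum Pf_single assms)
  also have "... = sg k a * Pf C h"
    by (subst monomial_sum[of h]) (simp add: Pf_sum Pf_single sum_distrib_left mult_single if_distrib cong: if_cong)
  finally show ?thesis .
qed

definition dl :: "nat \<Rightarrow> nat \<Rightarrow> nat \<Rightarrow> var \<Rightarrow>\<^sub>0 int" where
  "dl n m d = (\<Sum>j\<in>{1..m}. sg (Inr j) (int d)) - (\<Sum>i\<in>{2..n}. sg (Inl i) (int d))"

lemma lookup_dl_Inl: "lk (dl n m d) (Inl i) = (if i \<in> {2..n} then - int d else 0)"
  by (simp add: dl_def lookup_minus lookup_sum lookup_single when_def)
lemma lookup_dl_Inr: "lk (dl n m d) (Inr j) = (if j \<in> {1..m} then int d else 0)"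
  by (simp add: dl_def lookup_minus lookup_sum lookup_single when_def)

lemma fpot_alt: "fpot n m d = (\<Sum>i\<in>{2..n}. sg (sg (Inl i) (int d)) 1)
   - (\<Sum>j\<in>{1..m}. sg (sg (Inr j) (int d)) 1) + sg (dl n m d) zc"
  by (simp add: fpot_def dl_def)

lemma zDL_fpot: "zDL (fpot n m d) = sg (dl n m d) zc"
  by (simp add: fpot_alt zDL_add zDL_diff zDL_sum zDL_single)

lemma theta_fpot_Inl:
  assumes "i \<in> {2..n}"
  shows "theta (Inl i) (fpot n m d) = sg (sg (Inl i) (int d)) (of_nat d) - sg (dl n m d) (of_nat d * zc)"
proof -
  have 1: "theta (Inl i) (\<Sum>i'\<in>{2..n}. sg (sg (Inl i') (int d)) 1) = sg (sg (Inl i) (int d)) (of_nat d)"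
  proof -
    have t: "\<And>i'. theta (Inl i) (sg (sg (Inl i') (int d)) 1) = (if i' = i then sg (sg (Inl i) (int d)) (of_nat d) else 0)"
      by (simp add: theta_single lookup_single when_def)
    show ?thesis using assms by (simp add: theta_sum t)
  qed
  have 2: "theta (Inl i) (\<Sum>j\<in>{1..m}. sg (sg (Inr j) (int d)) 1) = 0"
    by (simp add: theta_sum theta_single lookup_single when_def)
  have 3: "theta (Inl i) (sg (dl n m d) zc) = - sg (dl n m d) (of_nat d * zc)"
    using assms by (simp add: theta_single lookup_dl_Inl single_uminus)
  show ?thesis unfolding fpot_alt theta_add theta_diff 1 2 3 by simp
qed

lemma theta_fpot_Inr:
  assumes "j \<in> {1..m}"
  shows "theta (Inr j) (fpot n m d) = sg (dl n m d) (of_nat d * zc) - sg (sg (Inr j) (int d)) (of_nat d)"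
proof -
  have 1: "theta (Inr j) (\<Sum>j'\<in>{1..m}. sg (sg (Inr j') (int d)) 1) = sg (sg (Inr j) (int d)) (of_nat d)"
  proof -
    have t: "\<And>j'. theta (Inr j) (sg (sg (Inr j') (int d)) 1) = (if j' = j then sg (sg (Inr j) (int d)) (of_nat d) else 0)"
      by (simp add: theta_single lookup_single when_def)
    show ?thesis using assms by (simp add: theta_sum t)
  qed
  have 2: "theta (Inr j) (\<Sum>i\<in>{2..n}. sg (sg (Inl i) (int d)) 1) = 0"
    by (simp add: theta_sum theta_single lookup_single when_def)
  have 3: "theta (Inr j) (sg (dl n m d) zc) = sg (dl n m d) (of_nat d * zc)"
    using assms by (simp add: theta_single lookup_dl_Inr)
  show ?thesis unfolding fpot_alt theta_add theta_diff 1 2 3 by simp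
qed

lemma fvars_finite [simp]: "finite (fvars n m)"
  by (simp add: fvars_def)

definition SUPP :: "nat \<Rightarrow> nat \<Rightarrow> (var \<Rightarrow>\<^sub>0 int) \<Rightarrow> bool" where
  "SUPP n m e \<longleftrightarrow> (\<forall>v. lk e v \<noteq> 0 \<longrightarrow> v \<in> fvars n m)"

lemma OU_I: "(\<And>e v. e \<in> Poly_Mapping.keys g \<Longrightarrow> lk e v \<noteq> 0 \<Longrightarrow> v \<in> fvars n m) \<Longrightarrow> (\<And>e. lk g e \<in> OS n m) \<Longrightarrow> g \<in> OU n m"
  unfolding OU_def by blast

lemma OU_keys: "g \<in> OU n m \<Longrightarrow> e \<in> Poly_Mapping.keys g \<Longrightarrow> SUPP n m e"
  unfolding OU_def SUPP_def by blast
lemma OU_coeff: "g \<in> OU n m \<Longrightarrow> lk g e \<in> OS n m"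
  unfolding OU_def by blast

lemma OU_single: "SUPP n m e \<Longrightarrow> c \<in> OS n m \<Longrightarrow> sg e c \<in> OU n m"
  by (rule OU_I) (auto simp: SUPP_def lookup_single when_def split: if_splits)

lemma OU_0 [simp]: "0 \<in> OU n m"
  by (rule OU_I) auto

lemma OU_add: "a \<in> OU n m \<Longrightarrow> b \<in> OU n m \<Longrightarrow> a + b \<in> OU n m"
  apply (rule OU_I)
  using keys_add[of a b] OU_keys[of a n m] OU_keys[of b n m]
   apply (force simp: SUPP_def)
  by (simp add: lookup_add OS_add OU_coeff)

lemma OU_scal: "c \<in> OS n m \<Longrightarrow> a \<in> OU n m \<Longrightarrow> scal c a \<in> OU n m"
  apply (rule OU_I)
   apply (metis (no_types, lifting) OU_keys SUPP_def in_keys_iff lookup_scal mult_zero_right)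
  by (simp add: lookup_scal OS_mult OU_coeff)

lemma OU_Pf: "a \<in> OU n m \<Longrightarrow> Pf C a \<in> OU n m"
  apply (rule OU_I)
   apply (metis (no_types, lifting) OU_keys SUPP_def in_keys_iff lookup_Pf)
  by (simp add: lookup_Pf OU_coeff)

lemma ET_I: "(\<And>v. v \<in> fvars n m \<Longrightarrow> h v \<in> OU n m) \<Longrightarrow>
   (\<Sum>v\<in>fvars n m. theta v (h v) + theta v (fpot n m d) * h v) \<in> exact_top n m d"
  unfolding exact_top_def by blast

lemma ET_E:
  assumes "g \<in> exact_top n m d"
  obtains h where "\<And>v. v \<in> fvars n m \<Longrightarrow> h v \<in> OU n m"
    "g = (\<Sum>v\<in>fvars n m. theta v (h v) + theta v (fpot n m d) * h v)"
proof -
  from assms obtain h where "\<forall>v\<in>fvars n m. h v \<in> OU n m"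
    "g = (\<Sum>v\<in>fvars n m. theta v (h v) + theta v (fpot n m d) * h v)"
    unfolding exact_top_def by blast
  then show thesis using that by blast
qed

lemma ET_0 [simp]: "0 \<in> exact_top n m d"
  using ET_I[of n m "\<lambda>_. 0" d] by simp

lemma ET_add: assumes "a \<in> exact_top n m d" "b \<in> exact_top n m d" shows "a + b \<in> exact_top n m d"
proof -
  obtain h where h: "\<And>v. v \<in> fvars n m \<Longrightarrow> h v \<in> OU n m"
    "a = (\<Sum>v\<in>fvars n m. theta v (h v) + theta v (fpot n m d) * h v)" using ET_E[OF assms(1)] by blast
  obtain h' where h': "\<And>v. v \<in> fvars n m \<Longrightarrow> h' v \<in> OU n m"
    "b = (\<Sum>v\<in>fvars n m. theta v (h' v) + theta v (fpot n m d) * h' v)" using ET_E[OF assms(2)] by blast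
  have "a + b = (\<Sum>v\<in>fvars n m. theta v (h v + h' v) + theta v (fpot n m d) * (h v + h' v))"
    unfolding h(2) h'(2) sum.distrib[symmetric] by (simp add: theta_add algebra_simps)
  moreover have "(\<Sum>v\<in>fvars n m. theta v (h v + h' v) + theta v (fpot n m d) * (h v + h' v)) \<in> exact_top n m d"
    by (rule ET_I) (simp add: OU_add h h')
  ultimately show ?thesis by simp
qed

lemma ET_scal: assumes "c \<in> OS n m" "a \<in> exact_top n m d" shows "scal c a \<in> exact_top n m d"
proof -
  obtain h where h: "\<And>v. v \<in> fvars n m \<Longrightarrow> h v \<in> OU n m"
    "a = (\<Sum>v\<in>fvars n m. theta v (h v) + theta v (fpot n m d) * h v)" using ET_E[OF assms(2)] by blast
  have "scal c a = (\<Sum>v\<in>fvars n m. theta v (scal c (h v)) + theta v (fpot n m d) * scal c (h v))"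
    unfolding h(2) by (simp add: scal_sum scal_add theta_scal scal_mult)
  moreover have "(\<Sum>v\<in>fvars n m. theta v (scal c (h v)) + theta v (fpot n m d) * scal c (h v)) \<in> exact_top n m d"
    by (rule ET_I) (simp add: OU_scal h assms(1))
  ultimately show ?thesis by simp
qed

lemma ET_uminus: "a \<in> exact_top n m d \<Longrightarrow> - a \<in> exact_top n m d"
  using ET_scal[of "-1" n m a d] OS_of_int[of "-1" n m] by (simp add: scal_uminus)

lemma ET_diff: "a \<in> exact_top n m d \<Longrightarrow> b \<in> exact_top n m d \<Longrightarrow> a - b \<in> exact_top n m d"
  using ET_add[of a n m d "-b"] ET_uminus[of b] by simp

lemma ET_sum: "(\<And>x. x \<in> A \<Longrightarrow> f x \<in> exact_top n m d) \<Longrightarrow> (\<Sum>x\<in>A. f x) \<in> exact_top n m d"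
  by (induction A rule: infinite_finite_induct) (auto intro: ET_add)

lemma ET_var: assumes "v \<in> fvars n m" "H \<in> OU n m"
  shows "theta v H + theta v (fpot n m d) * H \<in> exact_top n m d"
proof -
  let ?h = "\<lambda>w. if w = v then H else 0"
  have "(\<Sum>w\<in>fvars n m. theta w (?h w) + theta w (fpot n m d) * ?h w)
      = (\<Sum>w\<in>fvars n m. if w = v then theta v H + theta v (fpot n m d) * H else 0)"
    by (rule sum.cong) auto
  also have "... = theta v H + theta v (fpot n m d) * H" using assms(1) by simp
  finally show ?thesis using ET_I[of n m ?h d] assms(2) by auto
qed

lemma ET_Pf:
  assumes per: "\<And>k e. (\<forall>v. int d dvd lk k v) \<Longrightarrow> C (k + e) = C e"
    and a: "a \<in> exact_top n m d"
  shows "Pf C a \<in> exact_top n m d"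
proof -
  obtain h where h: "\<And>v. v \<in> fvars n m \<Longrightarrow> h v \<in> OU n m"
    "a = (\<Sum>v\<in>fvars n m. theta v (h v) + theta v (fpot n m d) * h v)" using ET_E[OF a] by blast
  have dvd_u: "\<forall>v. int d dvd lk (sg w (int d)) v" for w by (simp add: lookup_single when_def)
  have dvd_dl: "\<forall>v. int d dvd lk (dl n m d) v"
  proof
    fix v show "int d dvd lk (dl n m d) v"
      by (cases v) (simp_all add: lookup_dl_Inl lookup_dl_Inr)
  qed
  have key: "Pf C (theta v (fpot n m d) * g) = theta v (fpot n m d) * Pf C g" if "v \<in> fvars n m" for v g
  proof -
    from that consider (x) i where "v = Inl i" "i \<in> {2..n}" | (y) j where "v = Inr j" "j \<in> {1..m}"
      unfolding fvars_def by blast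
    then show ?thesis
    proof cases
      case x
      then show ?thesis
        by (simp add: theta_fpot_Inl left_diff_distrib Pf_diff Pf_mult_single per dvd_u dvd_dl)
    next
      case y
      then show ?thesis
        by (simp add: theta_fpot_Inr left_diff_distrib Pf_diff Pf_mult_single per dvd_u dvd_dl)
    qed
  qed
  have "Pf C a = (\<Sum>v\<in>fvars n m. theta v (Pf C (h v)) + theta v (fpot n m d) * Pf C (h v))"
    unfolding h(2) Pf_sum Pf_add by (simp add: Pf_theta key)
  moreover have "(\<Sum>v\<in>fvars n m. theta v (Pf C (h v)) + theta v (fpot n m d) * Pf C (h v)) \<in> exact_top n m d"
    by (rule ET_I) (simp add: OU_Pf h)
  ultimately show ?thesis by simp
qed

lemma cst_over: "of_nat d \<noteq> (0::complex) \<Longrightarrow> of_nat d * cst (1 / of_nat d) = 1"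
  by (metis cst_inv cst_of_nat)

lemma ET_RX:
  assumes "i \<in> {2..n}" "SUPP n m e" "c \<in> OS n m" "d \<ge> 1"
  shows "sg (sg (Inl i) (int d) + e) c + sg e (cst (of_int (lk e (Inl i)) / of_nat d) * c)
     - sg (dl n m d + e) (zc * c) \<in> exact_top n m d"
proof -
  let ?H = "sg e (cst (1 / of_nat d) * c)"
  have v: "Inl i \<in> fvars n m" using assms(1) by (simp add: fvars_def)
  have H: "?H \<in> OU n m" by (rule OU_single) (auto simp: assms OS_mult)
  have d0: "of_nat d \<noteq> (0::complex)" using assms(4) by simp
  have c1: "of_nat d * (cst (1 / of_nat d) * c) = c" using cst_over[OF d0] by (simp add: mult.assoc[symmetric])
  have c2: "of_int (lk e (Inl i)) * (cst (1 / of_nat d) * c) = cst (of_int (lk e (Inl i)) / of_nat d) * c"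
    by (simp add: cst_of_int[symmetric] mult.assoc[symmetric] cst_mult)
  have c3: "of_nat d * zc * (cst (1 / of_nat d) * c) = zc * c"
    using c1 by (simp add: algebra_simps)
  have "theta (Inl i) ?H + theta (Inl i) (fpot n m d) * ?H =
     sg (sg (Inl i) (int d) + e) c + sg e (cst (of_int (lk e (Inl i)) / of_nat d) * c)
     - sg (dl n m d + e) (zc * c)"
    using assms(1) by (simp add: theta_single theta_fpot_Inl left_diff_distrib mult_single c1 c2 c3)
  then show ?thesis using ET_var[OF v H, of d] by simp
qed

lemma ET_RY:
  assumes "j \<in> {1..m}" "SUPP n m e" "c \<in> OS n m" "d \<ge> 1"
  shows "sg e (cst (of_int (lk e (Inr j)) / of_nat d) * c) - sg (sg (Inr j) (int d) + e) c
     + sg (dl n m d + e) (zc * c) \<in> exact_top n m d"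
proof -
  let ?H = "sg e (cst (1 / of_nat d) * c)"
  have v: "Inr j \<in> fvars n m" using assms(1) by (simp add: fvars_def)
  have H: "?H \<in> OU n m" by (rule OU_single) (auto simp: assms OS_mult)
  have d0: "of_nat d \<noteq> (0::complex)" using assms(4) by simp
  have c1: "of_nat d * (cst (1 / of_nat d) * c) = c" using cst_over[OF d0] by (simp add: mult.assoc[symmetric])
  have c2: "of_int (lk e (Inr j)) * (cst (1 / of_nat d) * c) = cst (of_int (lk e (Inr j)) / of_nat d) * c"
    by (simp add: cst_of_int[symmetric] mult.assoc[symmetric] cst_mult)
  have c3: "of_nat d * zc * (cst (1 / of_nat d) * c) = zc * c"
    using c1 by (simp add: algebra_simps)
  have "theta (Inr j) ?H + theta (Inr j) (fpot n m d) * ?H =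
     sg e (cst (of_int (lk e (Inr j)) / of_nat d) * c) - sg (sg (Inr j) (int d) + e) c
     + sg (dl n m d + e) (zc * c)"
    using assms(1) by (simp add: theta_single theta_fpot_Inr left_diff_distrib mult_single c1 c2 c3)
  then show ?thesis using ET_var[OF v H, of d] by simp
qed

definition Spn :: "nat \<Rightarrow> nat \<Rightarrow> nat \<Rightarrow> (nat \<Rightarrow> rat) \<Rightarrow> (nat \<Rightarrow> rat) \<Rightarrow> lpoly set" where
  "Spn n m d \<alpha> \<beta> = {g. \<exists>K c. (\<forall>k\<le>K. c k \<in> OS n m) \<and>
      g - (\<Sum>k\<le>K. scal (c k) ((GM n m d ^^ k) (omega n m d \<alpha> \<beta>))) \<in> exact_top n m d}"

lemma Spn_I: "(\<forall>k\<le>K. c k \<in> OS n m) \<Longrightarrow>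
      g - (\<Sum>k\<le>K. scal (c k) ((GM n m d ^^ k) (omega n m d \<alpha> \<beta>))) \<in> exact_top n m d \<Longrightarrow> g \<in> Spn n m d \<alpha> \<beta>"
  unfolding Spn_def by blast

lemma Spn_ET: "g \<in> exact_top n m d \<Longrightarrow> g \<in> Spn n m d \<alpha> \<beta>"
  by (rule Spn_I[of 0 "\<lambda>_. 0"]) auto

lemma Spn_0 [simp]: "0 \<in> Spn n m d \<alpha> \<beta>"
  by (rule Spn_ET) simp

lemma ext_sum0: fixes KA j :: nat shows "(\<Sum>k\<le>KA+j. scal (if k \<le> KA then c k else 0) (X k)) = (\<Sum>k\<le>KA. scal (c k) (X k))"
proof (induction j)
  case 0
  then show ?case by (intro sum.cong) auto
next
  case (Suc j)
  then show ?case by simp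
qed

lemma ext_sum:
  fixes K1 K :: nat
  assumes "K1 \<le> K"
  shows "(\<Sum>k\<le>K. scal (if k \<le> K1 then c k else 0) (X k)) = (\<Sum>k\<le>K1. scal (c k) (X k))"
  using ext_sum0[where KA=K1 and j="K - K1" and c=c and X=X] assms by simp

lemma Spn_add:
  assumes "a \<in> Spn n m d \<alpha> \<beta>" "b \<in> Spn n m d \<alpha> \<beta>"
  shows "a + b \<in> Spn n m d \<alpha> \<beta>"
proof -
  let ?X = "\<lambda>k. (GM n m d ^^ k) (omega n m d \<alpha> \<beta>)"
  obtain K1 c1 where 1: "\<forall>k\<le>K1. c1 k \<in> OS n m" "a - (\<Sum>k\<le>K1. scal (c1 k) (?X k)) \<in> exact_top n m d"
    using assms(1) unfolding Spn_def by blast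
  obtain K2 c2 where 2: "\<forall>k\<le>K2. c2 k \<in> OS n m" "b - (\<Sum>k\<le>K2. scal (c2 k) (?X k)) \<in> exact_top n m d"
    using assms(2) unfolding Spn_def by blast
  let ?c = "\<lambda>k. (if k \<le> K1 then c1 k else 0) + (if k \<le> K2 then c2 k else 0)"
  have s: "(\<Sum>k\<le>K1+K2. scal (?c k) (?X k)) = (\<Sum>k\<le>K1. scal (c1 k) (?X k)) + (\<Sum>k\<le>K2. scal (c2 k) (?X k))"
    by (simp only: scal_add_left sum.distrib ext_sum[of K1 "K1+K2"] ext_sum[of K2 "K1+K2"] le_add1 le_add2)
  show ?thesis
  proof (rule Spn_I[of "K1+K2" ?c])
    show "\<forall>k\<le>K1 + K2. ?c k \<in> OS n m" using 1(1) 2(1) by (auto intro: OS_add)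
    have eq: "a + b - (\<Sum>k\<le>K1+K2. scal (?c k) (?X k)) =
       (a - (\<Sum>k\<le>K1. scal (c1 k) (?X k))) + (b - (\<Sum>k\<le>K2. scal (c2 k) (?X k)))"
      unfolding s by simp
    show "a + b - (\<Sum>k\<le>K1+K2. scal (?c k) (?X k)) \<in> exact_top n m d"
      unfolding eq by (rule ET_add[OF 1(2) 2(2)])
  qed
qed

lemma Spn_scal:
  assumes "c0 \<in> OS n m" "a \<in> Spn n m d \<alpha> \<beta>"
  shows "scal c0 a \<in> Spn n m d \<alpha> \<beta>"
proof -
  let ?X = "\<lambda>k. (GM n m d ^^ k) (omega n m d \<alpha> \<beta>)"
  obtain K c where 1: "\<forall>k\<le>K. c k \<in> OS n m" "a - (\<Sum>k\<le>K. scal (c k) (?X k)) \<in> exact_top n m d"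
    using assms(2) unfolding Spn_def by blast
  show ?thesis
  proof (rule Spn_I[of K "\<lambda>k. c0 * c k"])
    show "\<forall>k\<le>K. c0 * c k \<in> OS n m" using 1(1) assms(1) by (auto intro: OS_mult)
    have "scal c0 a - (\<Sum>k\<le>K. scal (c0 * c k) (?X k)) = scal c0 (a - (\<Sum>k\<le>K. scal (c k) (?X k)))"
      by (simp add: scal_diff scal_sum scal_scal)
    then show "scal c0 a - (\<Sum>k\<le>K. scal (c0 * c k) (?X k)) \<in> exact_top n m d"
      using 1(2) assms(1) by (simp add: ET_scal)
  qed
qed

lemma Spn_uminus: "a \<in> Spn n m d \<alpha> \<beta> \<Longrightarrow> - a \<in> Spn n m d \<alpha> \<beta>"
  using Spn_scal[of "-1" n m a d \<alpha> \<beta>] OS_of_int[of "-1" n m] by (simp add: scal_uminus)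

lemma Spn_diff: "a \<in> Spn n m d \<alpha> \<beta> \<Longrightarrow> b \<in> Spn n m d \<alpha> \<beta> \<Longrightarrow> a - b \<in> Spn n m d \<alpha> \<beta>"
  using Spn_add[of a n m d \<alpha> \<beta> "-b"] Spn_uminus[of b] by simp

lemma Spn_sum: "(\<And>x. x \<in> A \<Longrightarrow> f x \<in> Spn n m d \<alpha> \<beta>) \<Longrightarrow> (\<Sum>x\<in>A. f x) \<in> Spn n m d \<alpha> \<beta>"
  by (induction A rule: infinite_finite_induct) (auto intro: Spn_add)

lemma Spn_iter: "(GM n m d ^^ k) (omega n m d \<alpha> \<beta>) \<in> Spn n m d \<alpha> \<beta>"
proof (rule Spn_I[of k "\<lambda>j. if j = k then 1 else 0"])
  show "\<forall>j\<le>k. (if j = k then 1 else 0) \<in> OS n m" by auto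
  have "(\<Sum>j\<le>k. scal (if j = k then 1 else 0) ((GM n m d ^^ j) (omega n m d \<alpha> \<beta>)))
     = (\<Sum>j\<le>k. if j = k then (GM n m d ^^ j) (omega n m d \<alpha> \<beta>) else 0)"
    by (rule sum.cong) auto
  also have "... = (GM n m d ^^ k) (omega n m d \<alpha> \<beta>)" by simp
  finally show "(GM n m d ^^ k) (omega n m d \<alpha> \<beta>) -
      (\<Sum>j\<le>k. scal (if j = k then 1 else 0) ((GM n m d ^^ j) (omega n m d \<alpha> \<beta>))) \<in> exact_top n m d"
    by simp
qed

lemma GM_add: "GM n m d (a + b) = GM n m d a + GM n m d b"
  by (simp add: GM_def zDL_add algebra_simps)
lemma GM_0 [simp]: "GM n m d 0 = 0"
  by (simp add: GM_def)
lemma GM_single_poly: "GM n m d (sg e (Fract p 1)) =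
   sg e (Fract (pCons 0 (pderiv p)) 1) + sg (dl n m d + e) (Fract (pCons 0 p) 1)"
  by (simp add: GM_def zDL_single zD_Fract1 zDL_fpot mult_single zc_mult_Fract)

definition Ex :: "nat \<Rightarrow> nat \<Rightarrow> nat \<Rightarrow> (nat \<Rightarrow> rat) \<Rightarrow> (nat \<Rightarrow> rat) \<Rightarrow> (nat \<Rightarrow> int) \<Rightarrow> (nat \<Rightarrow> int) \<Rightarrow> var \<Rightarrow>\<^sub>0 int" where
  "Ex n m d \<alpha> \<beta> k l = (\<Sum>i\<in>{2..n}. sg (Inl i) (intmul d (\<alpha> i) + int d * k i))
      + (\<Sum>j\<in>{1..m}. sg (Inr j) (- intmul d (\<beta> j) + int d * l j))"

lemma lookup_Ex_Inl: "lk (Ex n m d \<alpha> \<beta> k l) (Inl i) = (if i \<in> {2..n} then intmul d (\<alpha> i) + int d * k i else 0)"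
  by (simp add: Ex_def lookup_add lookup_sum lookup_single when_def)
lemma lookup_Ex_Inr: "lk (Ex n m d \<alpha> \<beta> k l) (Inr j) = (if j \<in> {1..m} then - intmul d (\<beta> j) + int d * l j else 0)"
  by (simp add: Ex_def lookup_add lookup_sum lookup_single when_def)

lemma SUPP_Ex: "SUPP n m (Ex n m d \<alpha> \<beta> k l)"
  unfolding SUPP_def
proof (intro allI impI)
  fix v assume "lk (Ex n m d \<alpha> \<beta> k l) v \<noteq> 0"
  then show "v \<in> fvars n m"
    by (cases v) (auto simp: lookup_Ex_Inl lookup_Ex_Inr fvars_def split: if_splits)
qed

lemma Ex_shift_x: "i \<in> {2..n} \<Longrightarrow> Ex n m d \<alpha> \<beta> (k(i := k i + 1)) l = sg (Inl i) (int d) + Ex n m d \<alpha> \<beta> k l"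
  apply (rule poly_mapping_eqI)
  subgoal for v by (cases v) (auto simp: lookup_Ex_Inl lookup_Ex_Inr lookup_add lookup_single when_def algebra_simps)
  done

lemma Ex_shift_y: "j \<in> {1..m} \<Longrightarrow> Ex n m d \<alpha> \<beta> k (l(j := l j + 1)) = sg (Inr j) (int d) + Ex n m d \<alpha> \<beta> k l"
  apply (rule poly_mapping_eqI)
  subgoal for v by (cases v) (auto simp: lookup_Ex_Inl lookup_Ex_Inr lookup_add lookup_single when_def algebra_simps)
  done

lemma Ex_diag: "Ex n m d \<alpha> \<beta> (\<lambda>i. k i - 1) (\<lambda>j. l j + 1) = dl n m d + Ex n m d \<alpha> \<beta> k l"
  apply (rule poly_mapping_eqI)
  subgoal for v by (cases v) (auto simp: lookup_Ex_Inl lookup_Ex_Inr lookup_add lookup_dl_Inl lookup_dl_Inr algebra_simps)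
  done

lemma Ex_cong: "(\<forall>i\<in>{2..n}. k i = k' i) \<Longrightarrow> (\<forall>j\<in>{1..m}. l j = l' j) \<Longrightarrow> Ex n m d \<alpha> \<beta> k l = Ex n m d \<alpha> \<beta> k' l'"
  unfolding Ex_def by (intro arg_cong2[where f = "(+)"] sum.cong) auto

lemma omega_Ex: "omega n m d \<alpha> \<beta> = sg (Ex n m d \<alpha> \<beta> (\<lambda>_. 0) (\<lambda>_. 0)) 1"
  by (simp add: omega_def Ex_def)

abbreviation ED where "ED n m d \<alpha> \<beta> t \<equiv> Ex n m d \<alpha> \<beta> (\<lambda>_. - int t) (\<lambda>_. int t)"

lemma ED_Suc: "ED n m d \<alpha> \<beta> (Suc t) = dl n m d + ED n m d \<alpha> \<beta> t"
proof -
  have "ED n m d \<alpha> \<beta> (Suc t) = Ex n m d \<alpha> \<beta> (\<lambda>i. - int t - 1) (\<lambda>j. int t + 1)"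
    by (rule Ex_cong) auto
  then show ?thesis by (simp add: Ex_diag)
qed

inductive lt :: "nat \<Rightarrow> nat \<Rightarrow> nat \<Rightarrow> (nat \<Rightarrow> rat) \<Rightarrow> (nat \<Rightarrow> rat) \<Rightarrow> nat \<Rightarrow> lpoly \<Rightarrow> bool"
  for n m d \<alpha> \<beta> where
  lt0: "lt n m d \<alpha> \<beta> t 0"
| ltS: "lt n m d \<alpha> \<beta> t g \<Longrightarrow> s < t \<Longrightarrow> lt n m d \<alpha> \<beta> t (g + sg (ED n m d \<alpha> \<beta> s) (Fract p 1))"

lemma lt_mono: "lt n m d \<alpha> \<beta> t g \<Longrightarrow> lt n m d \<alpha> \<beta> (Suc t) g"
  by (induction rule: lt.induct) (auto intro: lt.intros)

lemma lt_add: "lt n m d \<alpha> \<beta> t b \<Longrightarrow> lt n m d \<alpha> \<beta> t a \<Longrightarrow> lt n m d \<alpha> \<beta> t (a + b)"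
proof (induction rule: lt.induct)
  case (lt0 t) then show ?case by simp
next
  case (ltS t g s p)
  then show ?case using lt.ltS[of n m d \<alpha> \<beta> t "a + g" s p] by (simp add: add.assoc)
qed

lemma lt_single: "s < t \<Longrightarrow> lt n m d \<alpha> \<beta> t (sg (ED n m d \<alpha> \<beta> s) (Fract p 1))"
  using lt.ltS[OF lt.lt0, of s t n m d \<alpha> \<beta> p] by simp

lemma lt_GM: "lt n m d \<alpha> \<beta> t g \<Longrightarrow> lt n m d \<alpha> \<beta> (Suc t) (GM n m d g)"
proof (induction rule: lt.induct)
  case (lt0 t) then show ?case by (simp add: lt.lt0)
next
  case (ltS t g s p)
  have "GM n m d (g + sg (ED n m d \<alpha> \<beta> s) (Fract p 1)) = GM n m d g +
     (sg (ED n m d \<alpha> \<beta> s) (Fract (pCons 0 (pderiv p)) 1) + sg (ED n m d \<alpha> \<beta> (Suc s)) (Fract (pCons 0 p) 1))"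
    by (simp only: GM_add GM_single_poly ED_Suc)
  moreover have "lt n m d \<alpha> \<beta> (Suc t) (sg (ED n m d \<alpha> \<beta> s) (Fract (pCons 0 (pderiv p)) 1) + sg (ED n m d \<alpha> \<beta> (Suc s)) (Fract (pCons 0 p) 1))"
    using ltS by (intro lt_add lt_single) auto
  ultimately show ?case using ltS lt_add by metis
qed

lemma lt_Spn: "lt n m d \<alpha> \<beta> t g \<Longrightarrow> (\<And>s c. s < t \<Longrightarrow> c \<in> OS n m \<Longrightarrow> sg (ED n m d \<alpha> \<beta> s) c \<in> Spn n m d \<alpha> \<beta>)
   \<Longrightarrow> g \<in> Spn n m d \<alpha> \<beta>"
  by (induction rule: lt.induct) (auto intro!: Spn_add OS_poly)

lemma iter_form: "\<exists>r. lt n m d \<alpha> \<beta> t r \<and>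
   (GM n m d ^^ t) (omega n m d \<alpha> \<beta>) = sg (ED n m d \<alpha> \<beta> t) (Fract (monom 1 t) 1) + r"
proof (induction t)
  case 0
  show ?case by (intro exI[of _ 0]) (simp add: lt.lt0 omega_Ex monom_0 fract_collapse flip: one_pCons)
next
  case (Suc t)
  then obtain r where r: "lt n m d \<alpha> \<beta> t r"
    "(GM n m d ^^ t) (omega n m d \<alpha> \<beta>) = sg (ED n m d \<alpha> \<beta> t) (Fract (monom 1 t) 1) + r" by blast
  let ?r = "sg (ED n m d \<alpha> \<beta> t) (Fract (pCons 0 (pderiv (monom 1 t))) 1) + GM n m d r"
  have "(GM n m d ^^ Suc t) (omega n m d \<alpha> \<beta>) = sg (ED n m d \<alpha> \<beta> (Suc t)) (Fract (monom 1 (Suc t)) 1) + ?r"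
    using r(2) by (simp only: funpow.simps comp_apply GM_add GM_single_poly ED_Suc monom_Suc add.commute add.left_commute add.assoc)
  moreover have "lt n m d \<alpha> \<beta> (Suc t) ?r"
    using r(1) by (intro lt_add lt_single lt_GM) auto
  ultimately show ?case by blast
qed

lemma diag_Spn: "c \<in> OS n m \<Longrightarrow> sg (ED n m d \<alpha> \<beta> t) c \<in> Spn n m d \<alpha> \<beta>"
proof (induction t arbitrary: c rule: less_induct)
  case (less t)
  obtain r where r: "lt n m d \<alpha> \<beta> t r"
    "(GM n m d ^^ t) (omega n m d \<alpha> \<beta>) = sg (ED n m d \<alpha> \<beta> t) (Fract (monom 1 t) 1) + r"
    using iter_form by blast
  have rs: "r \<in> Spn n m d \<alpha> \<beta>" using lt_Spn[OF r(1)] less.IH by blast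
  have "(GM n m d ^^ t) (omega n m d \<alpha> \<beta>) - r \<in> Spn n m d \<alpha> \<beta>"
    by (rule Spn_diff[OF Spn_iter rs])
  then have 1: "sg (ED n m d \<alpha> \<beta> t) (Fract (monom 1 t) 1) \<in> Spn n m d \<alpha> \<beta>"
    unfolding r(2) by simp
  have fc: "Fract (monom (1::complex) t) (monom 1 t) = 1"
    using mult_fract_cancel[of "monom (1::complex) t" 1 1] by (simp add: fract_collapse)
  have "c * Fract 1 (monom 1 t) \<in> OS n m" using less.prems OS_inv_zpow by (rule OS_mult)
  from Spn_scal[OF this 1]
  show ?case using fc
    by (simp add: scal_single mult.assoc eq_fract(1) One_fract_def[symmetric])
qed

lemma sum_lt1:
  fixes f g :: "'i \<Rightarrow> nat"
  assumes "finite A" "\<And>x. x \<in> A \<Longrightarrow> f x \<le> g x" "a \<in> A" "f a < g a"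
  shows "sum f A < sum g A"
  using sum_strict_mono_ex1[of A f g] assms by blast

lemma lattice:
  fixes I J :: "nat set" and Q :: "(nat \<Rightarrow> int) \<Rightarrow> (nat \<Rightarrow> int) \<Rightarrow> bool"
  assumes finI: "finite I" and finJ: "finite J"
  and cong: "\<And>k l k' l'. (\<forall>i\<in>I. k i = k' i) \<Longrightarrow> (\<forall>j\<in>J. l j = l' j) \<Longrightarrow> Q k l \<Longrightarrow> Q k' l'"
  and base: "\<And>t::nat. Q (\<lambda>_. - int t) (\<lambda>_. int t)"
  and fx: "\<And>k l i. i \<in> I \<Longrightarrow> Q k l \<Longrightarrow> Q (\<lambda>i. k i - 1) (\<lambda>j. l j + 1) \<Longrightarrow> Q (k(i := k i + 1)) l"
  and fy: "\<And>k l j. j \<in> J \<Longrightarrow> Q k l \<Longrightarrow> Q (\<lambda>i. k i - 1) (\<lambda>j. l j + 1) \<Longrightarrow> Q k (l(j := l j + 1))"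
  and b1: "\<And>k l j. j \<in> J \<Longrightarrow> Q k (l(j := l j + 1)) \<Longrightarrow> Q (\<lambda>i. k i - 1) (\<lambda>j. l j + 1) \<Longrightarrow> Q k l"
  and b2: "\<And>k l i j. i \<in> I \<Longrightarrow> j \<in> J \<Longrightarrow> Q (k(i := k i + 1)) l \<Longrightarrow> Q k (l(j := l j + 1)) \<Longrightarrow> Q k l"
  shows "Q k l"
proof -
  define R where "R k l \<longleftrightarrow> (\<forall>t::nat. Q (\<lambda>i. k i - int t) (\<lambda>j. l j + int t))" for k l
  have sh: "(\<lambda>i'. (\<lambda>i. k i - int t) i' - 1) = (\<lambda>i. k i - int (Suc t))"
           "(\<lambda>j'. (\<lambda>j. l j + int t) j' + 1) = (\<lambda>j. l j + int (Suc t))" for k l :: "nat \<Rightarrow> int" and t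
    by auto
  have Rcong: "R k' l'" if "\<forall>i\<in>I. k i = k' i" "\<forall>j\<in>J. l j = l' j" "R k l" for k l k' l'
    unfolding R_def
  proof
    fix t
    show "Q (\<lambda>i. k' i - int t) (\<lambda>j. l' j + int t)"
      using cong[of "\<lambda>i. k i - int t" "\<lambda>i. k' i - int t" "\<lambda>j. l j + int t" "\<lambda>j. l' j + int t"] that
      unfolding R_def by auto
  qed
  have Rbase: "R (\<lambda>_. - int s) (\<lambda>_. int s)" for s
    unfolding R_def
  proof
    fix t
    have "(\<lambda>i::nat. - int s - int t) = (\<lambda>_. - int (s + t))" "(\<lambda>j::nat. int s + int t) = (\<lambda>_. int (s + t))" by auto
    then show "Q (\<lambda>i. - int s - int t) (\<lambda>j. int s + int t)" using base[of "s+t"] by simp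
  qed
  have Rfx: "R (k(i := k i + 1)) l" if "i \<in> I" "R k l" for k l i
    unfolding R_def
  proof
    fix t
    have 1: "Q (\<lambda>i. k i - int t) (\<lambda>j. l j + int t)" "Q (\<lambda>i. k i - int (Suc t)) (\<lambda>j. l j + int (Suc t))"
      using that(2) unfolding R_def by blast+
    have "Q ((\<lambda>i. k i - int t)(i := k i - int t + 1)) (\<lambda>j. l j + int t)"
      using fx[OF that(1) 1(1)] 1(2) unfolding sh by simp
    moreover have "(\<lambda>i'. (k(i := k i + 1)) i' - int t) = (\<lambda>i. k i - int t)(i := k i - int t + 1)" by auto
    ultimately show "Q (\<lambda>i'. (k(i := k i + 1)) i' - int t) (\<lambda>j. l j + int t)" by simp
  qed
  have Rfy: "R k (l(j := l j + 1))" if "j \<in> J" "R k l" for k l j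
    unfolding R_def
  proof
    fix t
    have 1: "Q (\<lambda>i. k i - int t) (\<lambda>j. l j + int t)" "Q (\<lambda>i. k i - int (Suc t)) (\<lambda>j. l j + int (Suc t))"
      using that(2) unfolding R_def by blast+
    have "Q (\<lambda>i. k i - int t) ((\<lambda>j. l j + int t)(j := l j + int t + 1))"
      using fy[OF that(1) 1(1)] 1(2) unfolding sh by simp
    moreover have "(\<lambda>j'. (l(j := l j + 1)) j' + int t) = (\<lambda>j. l j + int t)(j := l j + int t + 1)" by auto
    ultimately show "Q (\<lambda>i. k i - int t) (\<lambda>j'. (l(j := l j + 1)) j' + int t)" by simp
  qed
  have Rb1: "R k l" if "j \<in> J" "R k (l(j := l j + 1))" "R (\<lambda>i. k i - 1) (\<lambda>j. l j + 1)" for k l j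
    unfolding R_def
  proof
    fix t
    have 1: "Q (\<lambda>i. k i - int t) (\<lambda>j'. (l(j := l j + 1)) j' + int t)"
      using that(2) unfolding R_def by blast
    have 2: "Q (\<lambda>i. k i - 1 - int t) (\<lambda>j. l j + 1 + int t)"
      using that(3) unfolding R_def by blast
    have e1: "(\<lambda>j'. (l(j := l j + 1)) j' + int t) = (\<lambda>j. l j + int t)(j := l j + int t + 1)" by auto
    have e2: "(\<lambda>i. k i - 1 - int t) = (\<lambda>i'. (\<lambda>i. k i - int t) i' - 1)" "(\<lambda>j. l j + 1 + int t) = (\<lambda>j'. (\<lambda>j. l j + int t) j' + 1)"
      by auto
    show "Q (\<lambda>i. k i - int t) (\<lambda>j. l j + int t)"
      using b1[OF that(1), of "\<lambda>i. k i - int t" "\<lambda>j. l j + int t"] 1 2 unfolding e1 e2 by simp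
  qed
  have Rb2: "R k l" if "i \<in> I" "j \<in> J" "R (k(i := k i + 1)) l" "R k (l(j := l j + 1))" for k l i j
    unfolding R_def
  proof
    fix t
    have 1: "Q (\<lambda>i'. (k(i := k i + 1)) i' - int t) (\<lambda>j. l j + int t)"
      using that(3) unfolding R_def by blast
    have 2: "Q (\<lambda>i. k i - int t) (\<lambda>j'. (l(j := l j + 1)) j' + int t)"
      using that(4) unfolding R_def by blast
    have e1: "(\<lambda>j'. (l(j := l j + 1)) j' + int t) = (\<lambda>j. l j + int t)(j := l j + int t + 1)" by auto
    have e2: "(\<lambda>i'. (k(i := k i + 1)) i' - int t) = (\<lambda>i. k i - int t)(i := k i - int t + 1)" by auto
    show "Q (\<lambda>i. k i - int t) (\<lambda>j. l j + int t)"
      using b2[OF that(1,2), of "\<lambda>i. k i - int t" "\<lambda>j. l j + int t"] 1 2 unfolding e1 e2 by simp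
  qed
  have cone: "R k l" if "\<forall>i\<in>I. - int s \<le> k i" "\<forall>j\<in>J. int s \<le> l j" for s k l
  proof -
    define N where "N k l = (\<Sum>i\<in>I. nat (k i + int s)) + (\<Sum>j\<in>J. nat (l j - int s))" for k l
    have "\<forall>k l. N k l = M \<longrightarrow> (\<forall>i\<in>I. - int s \<le> k i) \<longrightarrow> (\<forall>j\<in>J. int s \<le> l j) \<longrightarrow> R k l" for M
    proof (induction M rule: less_induct)
      case (less M)
      show ?case
      proof (intro allI impI)
        fix k l assume NM: "N k l = M" and hk: "\<forall>i\<in>I. - int s \<le> k i" and hl: "\<forall>j\<in>J. int s \<le> l j"
        show "R k l"
        proof (cases "\<exists>i\<in>I. - int s < k i")
          case True
          then obtain i where i: "i \<in> I" "- int s < k i" by blast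
          let ?k = "k(i := k i - 1)"
          have "N ?k l < N k l"
          proof -
            have "(\<Sum>i\<in>I. nat (?k i + int s)) < (\<Sum>i\<in>I. nat (k i + int s))"
              by (rule sum_lt1[OF finI _ i(1)]) (use i in auto)
            then show ?thesis unfolding N_def by simp
          qed
          moreover have "\<forall>i'\<in>I. - int s \<le> ?k i'" using hk i by auto
          ultimately have "R ?k l" using less.IH[of "N ?k l"] NM hl by blast
          from Rfx[OF i(1) this] show "R k l" by simp
        next
          case False
          note F1 = False
          show ?thesis
          proof (cases "\<exists>j\<in>J. int s < l j")
            case True
            then obtain j where j: "j \<in> J" "int s < l j" by blast
            let ?l = "l(j := l j - 1)"
            have "N k ?l < N k l"
            proof -
              have "(\<Sum>j\<in>J. nat (?l j - int s)) < (\<Sum>j\<in>J. nat (l j - int s))"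
                by (rule sum_lt1[OF finJ _ j(1)]) (use j in auto)
              then show ?thesis unfolding N_def by simp
            qed
            moreover have "\<forall>j'\<in>J. int s \<le> ?l j'" using hl j by auto
            ultimately have "R k ?l" using less.IH[of "N k ?l"] NM hk by blast
            from Rfy[OF j(1) this] show "R k l" by simp
          next
            case False
            have "\<forall>i\<in>I. - int s = k i" using F1 hk by force
            moreover have "\<forall>j\<in>J. int s = l j" using False hl by force
            ultimately show "R k l" using Rcong[OF _ _ Rbase[of s]] by blast
          qed
        qed
      qed
    qed
    then show ?thesis using that by blast
  qed
  define rho where "rho k l = (\<Sum>j\<in>J. nat (- l j) + (\<Sum>i\<in>I. nat (- k i - l j)))" for k l
  have "\<forall>k l. rho k l = M \<longrightarrow> R k l" for M
  proof (induction M rule: less_induct)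
    case (less M)
    show ?case
    proof (intro allI impI)
      fix k l assume RM: "rho k l = M"
      show "R k l"
      proof (cases "\<exists>i\<in>I. \<exists>j\<in>J. 0 < - k i - l j")
        case True
        then obtain i j where ij: "i \<in> I" "j \<in> J" "0 < - k i - l j" by blast
        have "rho (k(i := k i + 1)) l < rho k l" unfolding rho_def
        proof (rule sum_lt1[OF finJ _ ij(2)])
          fix j' assume "j' \<in> J"
          show "nat (- l j') + (\<Sum>i'\<in>I. nat (- (k(i := k i + 1)) i' - l j')) \<le> nat (- l j') + (\<Sum>i\<in>I. nat (- k i - l j'))"
            by (auto intro!: sum_mono)
        next
          have "(\<Sum>i'\<in>I. nat (- (k(i := k i + 1)) i' - l j)) < (\<Sum>i\<in>I. nat (- k i - l j))"
            by (rule sum_lt1[OF finI _ ij(1)]) (use ij(3) in auto)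
          then show "nat (- l j) + (\<Sum>i'\<in>I. nat (- (k(i := k i + 1)) i' - l j)) < nat (- l j) + (\<Sum>i\<in>I. nat (- k i - l j))"
            by simp
        qed
        moreover have "rho k (l(j := l j + 1)) < rho k l" unfolding rho_def
        proof (rule sum_lt1[OF finJ _ ij(2)])
          fix j' assume "j' \<in> J"
          show "nat (- (l(j := l j + 1)) j') + (\<Sum>i'\<in>I. nat (- k i' - (l(j := l j + 1)) j')) \<le> nat (- l j') + (\<Sum>i\<in>I. nat (- k i - l j'))"
            by (auto intro!: sum_mono add_mono)
        next
          have "(\<Sum>i'\<in>I. nat (- k i' - (l(j := l j + 1)) j)) < (\<Sum>i\<in>I. nat (- k i - l j))"
            by (rule sum_lt1[OF finI _ ij(1)]) (use ij(3) in auto)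
          then show "nat (- (l(j := l j + 1)) j) + (\<Sum>i'\<in>I. nat (- k i' - (l(j := l j + 1)) j)) < nat (- l j) + (\<Sum>i\<in>I. nat (- k i - l j))"
            by simp
        qed
        ultimately show "R k l" using less.IH RM Rb2[OF ij(1,2)] by blast
      next
        case False
        note F1 = False
        show ?thesis
        proof (cases "\<exists>j\<in>J. l j < 0")
          case True
          then obtain j where j: "j \<in> J" "l j < 0" by blast
          have "rho k (l(j := l j + 1)) < rho k l" unfolding rho_def
          proof (rule sum_lt1[OF finJ _ j(1)])
            fix j' assume "j' \<in> J"
            show "nat (- (l(j := l j + 1)) j') + (\<Sum>i'\<in>I. nat (- k i' - (l(j := l j + 1)) j')) \<le> nat (- l j') + (\<Sum>i\<in>I. nat (- k i - l j'))"
              by (auto intro!: sum_mono add_mono)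
          next
            have "(\<Sum>i'\<in>I. nat (- k i' - (l(j := l j + 1)) j)) \<le> (\<Sum>i\<in>I. nat (- k i - l j))"
              by (auto intro!: sum_mono)
            then show "nat (- (l(j := l j + 1)) j) + (\<Sum>i'\<in>I. nat (- k i' - (l(j := l j + 1)) j)) < nat (- l j) + (\<Sum>i\<in>I. nat (- k i - l j))"
              using j(2) by simp
          qed
          moreover have "rho (\<lambda>i. k i - 1) (\<lambda>j. l j + 1) < rho k l" unfolding rho_def
          proof (rule sum_lt1[OF finJ _ j(1)])
            fix j' assume "j' \<in> J"
            show "nat (- (l j' + 1)) + (\<Sum>i'\<in>I. nat (- (k i' - 1) - (l j' + 1))) \<le> nat (- l j') + (\<Sum>i\<in>I. nat (- k i - l j'))"
              by simp
          next
            show "nat (- (l j + 1)) + (\<Sum>i'\<in>I. nat (- (k i' - 1) - (l j + 1))) < nat (- l j) + (\<Sum>i\<in>I. nat (- k i - l j))"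
              using j(2) by simp
          qed
          ultimately show "R k l" using less.IH RM Rb1[OF j(1)] by blast
        next
          case False
          define s where "s = nat (Max (insert 0 ((\<lambda>i. - k i) ` I)))"
          have fin: "finite (insert 0 ((\<lambda>i. - k i) ` I))" using finI by simp
          have s1: "\<forall>i\<in>I. - int s \<le> k i"
          proof
            fix i assume "i \<in> I"
            then have "- k i \<le> Max (insert 0 ((\<lambda>i. - k i) ` I))" using fin by (intro Max_ge) auto
            then show "- int s \<le> k i" unfolding s_def by linarith
          qed
          have s2: "\<forall>j\<in>J. int s \<le> l j"
          proof
            fix j assume j: "j \<in> J"
            have "Max (insert 0 ((\<lambda>i. - k i) ` I)) \<le> l j"
              using fin F1 False j by (subst Max_le_iff) force+
            moreover have "0 \<le> Max (insert 0 ((\<lambda>i. - k i) ` I))" using fin by (intro Max_ge) auto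
            ultimately show "int s \<le> l j" unfolding s_def by simp
          qed
          show "R k l" by (rule cone[OF s1 s2])
        qed
      qed
    qed
  qed
  then have "R k l" by blast
  then have "Q (\<lambda>i. k i - int 0) (\<lambda>j. l j + int 0)" unfolding R_def by blast
  then show ?thesis by simp
qed

lemma intmul_eq: "of_nat d * r \<in> \<int> \<Longrightarrow> of_int (intmul d r) = of_nat d * r"
  unfolding intmul_def by (metis Ints_cases floor_of_int)

lemma cst_cancel: "x \<noteq> 0 \<Longrightarrow> y \<noteq> 0 \<Longrightarrow> cst (x / y) * (cst (y / x) * c) = c"
  by (simp add: mult.assoc[symmetric] cst_mult)

lemma root_props:
  assumes "d \<ge> 1"
  defines "w \<equiv> exp (2 * of_real pi * \<i> * of_nat 1 / of_nat d)"
  shows "w ^ d = 1" "w \<noteq> 0" "\<And>r s. r < d \<Longrightarrow> s < d \<Longrightarrow> w ^ r = w ^ s \<Longrightarrow> r = s"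
proof -
  show "w ^ d = 1" using complex_root_unity[of d 1] assms by simp
  show "w \<noteq> 0" unfolding w_def by simp
  have p: "w ^ r = exp (2 * of_real pi * \<i> * of_nat r / of_nat d)" for r
    unfolding w_def by (simp add: exp_of_nat_mult[symmetric] algebra_simps)
  fix r s assume "r < d" "s < d" "w ^ r = w ^ s"
  then show "r = s" using complex_root_unity_eq[of d r s] assms unfolding p by simp
qed

lemma powi_mod:
  fixes w :: complex
  assumes "w \<noteq> 0" "w ^ d = 1" "d \<ge> 1"
  shows "w powi x = w ^ nat (x mod int d)"
proof -
  have "x = x mod int d + int d * (x div int d)" by simp
  then have "w powi x = w powi (x mod int d) * w powi (int d * (x div int d))"
    by (metis assms(1) power_int_add)
  also have "w powi (int d * (x div int d)) = 1"
    by (simp add: power_int_mult assms(2))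
  also have "w powi (x mod int d) = w ^ nat (x mod int d)"
    using assms(3) by (simp add: power_int_def)
  finally show ?thesis by simp
qed

lemma all_Spn:
  assumes d1: "d \<ge> 1"
    and nd_b: "\<And>j. j \<in> {1..m} \<Longrightarrow> \<not> int d dvd intmul d (\<beta> j)"
    and nd_ab: "\<And>i j. i \<in> {2..n} \<Longrightarrow> j \<in> {1..m} \<Longrightarrow> \<not> int d dvd (intmul d (\<alpha> i) - intmul d (\<beta> j))"
  shows "\<forall>c\<in>OS n m. sg (Ex n m d \<alpha> \<beta> k l) c \<in> Spn n m d \<alpha> \<beta>"
proof (rule lattice[where Q = "\<lambda>k l. \<forall>c\<in>OS n m. sg (Ex n m d \<alpha> \<beta> k l) c \<in> Spn n m d \<alpha> \<beta>" and I = "{2..n}" and J = "{1..m}"])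
  have dnz: "of_nat d \<noteq> (0::complex)" using d1 by simp
  show "finite {2..n}" "finite {1..m}" by simp_all
  show "\<forall>c\<in>OS n m. sg (Ex n m d \<alpha> \<beta> k' l') c \<in> Spn n m d \<alpha> \<beta>"
    if "\<forall>i\<in>{2..n}. k i = k' i" "\<forall>j\<in>{1..m}. l j = l' j" "\<forall>c\<in>OS n m. sg (Ex n m d \<alpha> \<beta> k l) c \<in> Spn n m d \<alpha> \<beta>"
    for k l k' l' using Ex_cong[OF that(1,2), of d \<alpha> \<beta>] that(3) by simp
  show "\<forall>c\<in>OS n m. sg (Ex n m d \<alpha> \<beta> (\<lambda>_. - int t) (\<lambda>_. int t)) c \<in> Spn n m d \<alpha> \<beta>" for t
    using diag_Spn by blast
  show "\<forall>c\<in>OS n m. sg (Ex n m d \<alpha> \<beta> (k(i := k i + 1)) l) c \<in> Spn n m d \<alpha> \<beta>"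
    if i: "i \<in> {2..n}" and Q1: "\<forall>c\<in>OS n m. sg (Ex n m d \<alpha> \<beta> k l) c \<in> Spn n m d \<alpha> \<beta>"
      and Q2: "\<forall>c\<in>OS n m. sg (Ex n m d \<alpha> \<beta> (\<lambda>i. k i - 1) (\<lambda>j. l j + 1)) c \<in> Spn n m d \<alpha> \<beta>" for k l i
  proof
    fix c assume c: "c \<in> OS n m"
    define e where "e = Ex n m d \<alpha> \<beta> k l"
    let ?a = "cst (of_int (lk e (Inl i)) / of_nat d) * c"
    have X: "sg (sg (Inl i) (int d) + e) c + sg e ?a - sg (dl n m d + e) (zc * c) \<in> Spn n m d \<alpha> \<beta>"
      by (rule Spn_ET, rule ET_RX[OF i _ c d1]) (simp add: e_def SUPP_Ex)
    have A: "sg e ?a \<in> Spn n m d \<alpha> \<beta>" using Q1 c unfolding e_def by (simp add: OS_mult)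
    have B: "sg (dl n m d + e) (zc * c) \<in> Spn n m d \<alpha> \<beta>"
      using Q2 c unfolding e_def by (simp add: OS_mult Ex_diag)
    have "sg (Ex n m d \<alpha> \<beta> (k(i := k i + 1)) l) c =
       (sg (sg (Inl i) (int d) + e) c + sg e ?a - sg (dl n m d + e) (zc * c)) - sg e ?a + sg (dl n m d + e) (zc * c)"
      by (simp add: Ex_shift_x[OF i] e_def)
    then show "sg (Ex n m d \<alpha> \<beta> (k(i := k i + 1)) l) c \<in> Spn n m d \<alpha> \<beta>"
      using Spn_add[OF Spn_diff[OF X A] B] by simp
  qed
  show "\<forall>c\<in>OS n m. sg (Ex n m d \<alpha> \<beta> k (l(j := l j + 1))) c \<in> Spn n m d \<alpha> \<beta>"
    if j: "j \<in> {1..m}" and Q1: "\<forall>c\<in>OS n m. sg (Ex n m d \<alpha> \<beta> k l) c \<in> Spn n m d \<alpha> \<beta>"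
      and Q2: "\<forall>c\<in>OS n m. sg (Ex n m d \<alpha> \<beta> (\<lambda>i. k i - 1) (\<lambda>j. l j + 1)) c \<in> Spn n m d \<alpha> \<beta>" for k l j
  proof
    fix c assume c: "c \<in> OS n m"
    define e where "e = Ex n m d \<alpha> \<beta> k l"
    let ?a = "cst (of_int (lk e (Inr j)) / of_nat d) * c"
    have X: "sg e ?a - sg (sg (Inr j) (int d) + e) c + sg (dl n m d + e) (zc * c) \<in> Spn n m d \<alpha> \<beta>"
      by (rule Spn_ET, rule ET_RY[OF j _ c d1]) (simp add: e_def SUPP_Ex)
    have A: "sg e ?a \<in> Spn n m d \<alpha> \<beta>" using Q1 c unfolding e_def by (simp add: OS_mult)
    have B: "sg (dl n m d + e) (zc * c) \<in> Spn n m d \<alpha> \<beta>"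
      using Q2 c unfolding e_def by (simp add: OS_mult Ex_diag)
    have "sg (Ex n m d \<alpha> \<beta> k (l(j := l j + 1))) c =
       sg e ?a + sg (dl n m d + e) (zc * c) - (sg e ?a - sg (sg (Inr j) (int d) + e) c + sg (dl n m d + e) (zc * c))"
      by (simp add: Ex_shift_y[OF j] e_def)
    then show "sg (Ex n m d \<alpha> \<beta> k (l(j := l j + 1))) c \<in> Spn n m d \<alpha> \<beta>"
      using Spn_diff[OF Spn_add[OF A B] X] by simp
  qed
  show "\<forall>c\<in>OS n m. sg (Ex n m d \<alpha> \<beta> k l) c \<in> Spn n m d \<alpha> \<beta>"
    if j: "j \<in> {1..m}" and Q1: "\<forall>c\<in>OS n m. sg (Ex n m d \<alpha> \<beta> k (l(j := l j + 1))) c \<in> Spn n m d \<alpha> \<beta>"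
      and Q2: "\<forall>c\<in>OS n m. sg (Ex n m d \<alpha> \<beta> (\<lambda>i. k i - 1) (\<lambda>j. l j + 1)) c \<in> Spn n m d \<alpha> \<beta>" for k l j
  proof
    fix c assume c: "c \<in> OS n m"
    define e where "e = Ex n m d \<alpha> \<beta> k l"
    define ej where "ej = lk e (Inr j)"
    have ej: "ej = - intmul d (\<beta> j) + int d * l j" using j by (simp add: ej_def e_def lookup_Ex_Inr)
    have ejnz: "of_int ej \<noteq> (0::complex)"
    proof
      assume "of_int ej = (0::complex)"
      then have "ej = 0" by (simp only: of_int_eq_0_iff)
      then have "intmul d (\<beta> j) = int d * l j" using ej by simp
      then show False using nd_b[OF j] by simp
    qed
    define c' where "c' = cst (of_nat d / of_int ej) * c"
    have c': "c' \<in> OS n m" unfolding c'_def using c by (simp add: OS_mult)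
    have X: "sg e (cst (of_int ej / of_nat d) * c') - sg (sg (Inr j) (int d) + e) c' + sg (dl n m d + e) (zc * c') \<in> Spn n m d \<alpha> \<beta>"
      unfolding ej_def by (rule Spn_ET, rule ET_RY[OF j _ c' d1]) (simp add: e_def SUPP_Ex)
    have cc: "cst (of_int ej / of_nat d) * c' = c" unfolding c'_def using cst_cancel[OF ejnz dnz] .
    have A: "sg (sg (Inr j) (int d) + e) c' \<in> Spn n m d \<alpha> \<beta>" using Q1 c' unfolding e_def by (simp add: Ex_shift_y[OF j])
    have B: "sg (dl n m d + e) (zc * c') \<in> Spn n m d \<alpha> \<beta>"
      using Q2 c' unfolding e_def by (simp add: OS_mult Ex_diag)
    have "sg e c = (sg e (cst (of_int ej / of_nat d) * c') - sg (sg (Inr j) (int d) + e) c' + sg (dl n m d + e) (zc * c'))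
        + sg (sg (Inr j) (int d) + e) c' - sg (dl n m d + e) (zc * c')"
      by (simp add: cc)
    then show "sg (Ex n m d \<alpha> \<beta> k l) c \<in> Spn n m d \<alpha> \<beta>"
      using Spn_diff[OF Spn_add[OF X A] B] unfolding e_def by simp
  qed
  show "\<forall>c\<in>OS n m. sg (Ex n m d \<alpha> \<beta> k l) c \<in> Spn n m d \<alpha> \<beta>"
    if i: "i \<in> {2..n}" and j: "j \<in> {1..m}" and Q1: "\<forall>c\<in>OS n m. sg (Ex n m d \<alpha> \<beta> (k(i := k i + 1)) l) c \<in> Spn n m d \<alpha> \<beta>"
      and Q2: "\<forall>c\<in>OS n m. sg (Ex n m d \<alpha> \<beta> k (l(j := l j + 1))) c \<in> Spn n m d \<alpha> \<beta>" for k l i j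
  proof
    fix c assume c: "c \<in> OS n m"
    define e where "e = Ex n m d \<alpha> \<beta> k l"
    define s where "s = lk e (Inl i) + lk e (Inr j)"
    have s: "s = intmul d (\<alpha> i) - intmul d (\<beta> j) + int d * (k i + l j)" using i j
      by (simp add: s_def e_def lookup_Ex_Inr lookup_Ex_Inl algebra_simps)
    have snz: "of_int s \<noteq> (0::complex)"
    proof
      assume "of_int s = (0::complex)"
      then have "s = 0" by (simp only: of_int_eq_0_iff)
      then have "intmul d (\<alpha> i) - intmul d (\<beta> j) = int d * (- k i - l j)" using s by (simp add: algebra_simps)
      then show False using nd_ab[OF i j] by (metis dvd_triv_left)
    qed
    define c' where "c' = cst (of_nat d / of_int s) * c"
    have c': "c' \<in> OS n m" unfolding c'_def using c by (simp add: OS_mult)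
    let ?ai = "cst (of_int (lk e (Inl i)) / of_nat d) * c'"
    let ?aj = "cst (of_int (lk e (Inr j)) / of_nat d) * c'"
    have X1: "sg (sg (Inl i) (int d) + e) c' + sg e ?ai - sg (dl n m d + e) (zc * c') \<in> Spn n m d \<alpha> \<beta>"
      by (rule Spn_ET, rule ET_RX[OF i _ c' d1]) (simp add: e_def SUPP_Ex)
    have X2: "sg e ?aj - sg (sg (Inr j) (int d) + e) c' + sg (dl n m d + e) (zc * c') \<in> Spn n m d \<alpha> \<beta>"
      by (rule Spn_ET, rule ET_RY[OF j _ c' d1]) (simp add: e_def SUPP_Ex)
    have cc: "?ai + ?aj = c"
    proof -
      have "?ai + ?aj = cst (of_int s / of_nat d) * c'"
        by (simp add: s_def cst_add distrib_right[symmetric] add_divide_distrib)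
      also have "... = c" unfolding c'_def using cst_cancel[OF snz dnz] .
      finally show ?thesis .
    qed
    have A: "sg (sg (Inl i) (int d) + e) c' \<in> Spn n m d \<alpha> \<beta>" using Q1 c' unfolding e_def by (simp add: Ex_shift_x[OF i])
    have B: "sg (sg (Inr j) (int d) + e) c' \<in> Spn n m d \<alpha> \<beta>" using Q2 c' unfolding e_def by (simp add: Ex_shift_y[OF j])
    have "sg e c = (sg (sg (Inl i) (int d) + e) c' + sg e ?ai - sg (dl n m d + e) (zc * c'))
       + (sg e ?aj - sg (sg (Inr j) (int d) + e) c' + sg (dl n m d + e) (zc * c'))
       - sg (sg (Inl i) (int d) + e) c' + sg (sg (Inr j) (int d) + e) c'"
      by (simp add: cc[symmetric] single_add)
    then show "sg (Ex n m d \<alpha> \<beta> k l) c \<in> Spn n m d \<alpha> \<beta>"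
      using Spn_add[OF Spn_diff[OF Spn_add[OF X1 X2] A] B] unfolding e_def by simp
  qed
qed

abbreviation E0 where "E0 n m d \<alpha> \<beta> \<equiv> Ex n m d \<alpha> \<beta> (\<lambda>_. 0) (\<lambda>_. 0)"

lemma chi_prod: "chi n m d \<alpha> \<beta> z = (\<Prod>w\<in>fvars n m. z w powi lk (E0 n m d \<alpha> \<beta>) w)"
proof -
  have disj: "Inl ` {2..n} \<inter> Inr ` {1..m} = ({} :: var set)" by auto
  have "(\<Prod>w\<in>fvars n m. z w powi lk (E0 n m d \<alpha> \<beta>) w)
     = (\<Prod>w\<in>Inl ` {2..n}. z w powi lk (E0 n m d \<alpha> \<beta>) w) * (\<Prod>w\<in>Inr ` {1..m}. z w powi lk (E0 n m d \<alpha> \<beta>) w)"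
    unfolding fvars_def by (rule prod.union_disjoint) (use disj in auto)
  also have "(\<Prod>w\<in>Inl ` {2..n}. z w powi lk (E0 n m d \<alpha> \<beta>) w) = (\<Prod>i\<in>{2..n}. z (Inl i) powi intmul d (\<alpha> i))"
    by (subst prod.reindex) (auto simp: inj_on_def lookup_Ex_Inl intro!: prod.cong)
  also have "(\<Prod>w\<in>Inr ` {1..m}. z w powi lk (E0 n m d \<alpha> \<beta>) w) = (\<Prod>j\<in>{1..m}. z (Inr j) powi (- intmul d (\<beta> j)))"
    by (subst prod.reindex) (auto simp: inj_on_def lookup_Ex_Inr intro!: prod.cong)
  finally show ?thesis by (simp add: chi_def)
qed

lemma omega_iso: "omega n m d \<alpha> \<beta> \<in> isotypic n m d \<alpha> \<beta>"
  unfolding isotypic_def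
proof (intro CollectI conjI ballI)
  show "omega n m d \<alpha> \<beta> \<in> OU n m" unfolding omega_Ex by (rule OU_single) (simp_all add: SUPP_Ex)
  fix z assume "z \<in> Gset n m d"
  have "gact n m z (omega n m d \<alpha> \<beta>) - scal (cst (chi n m d \<alpha> \<beta> z)) (omega n m d \<alpha> \<beta>) = 0"
    unfolding omega_Ex by (simp add: gact_single scal_single chi_prod)
  then show "gact n m z (omega n m d \<alpha> \<beta>) - scal (cst (chi n m d \<alpha> \<beta> z)) (omega n m d \<alpha> \<beta>) \<in> exact_top n m d"
    by simp
qed

lemma periodic_mod:
  assumes "\<forall>u. int d dvd lk k u"
  shows "lk (k + e) v mod int d = lk e v mod int d"
proof -
  obtain t where "lk k v = int d * t" using assms by blast
  then show ?thesis by (simp add: lookup_add)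
qed

lemma proj_one:
  assumes g: "g \<in> isotypic n m d \<alpha> \<beta>" and v: "v \<in> fvars n m" and d1: "d \<ge> 1"
  shows "g - Pf (\<lambda>e. lk e v mod int d = lk (E0 n m d \<alpha> \<beta>) v mod int d) g \<in> exact_top n m d"
proof -
  define w where "w = exp (2 * of_real pi * \<i> * of_nat 1 / of_nat d)"
  have w: "w ^ d = 1" "w \<noteq> 0" "\<And>r s. r < d \<Longrightarrow> s < d \<Longrightarrow> w ^ r = w ^ s \<Longrightarrow> r = s"
    using root_props[OF d1] unfolding w_def by blast+
  define z where "z = (\<lambda>u. if u = v then w else (1::complex))"
  have zG: "z \<in> Gset n m d" unfolding Gset_def z_def using w(1) by auto
  have Y: "gact n m z g - scal (cst (chi n m d \<alpha> \<beta> z)) g \<in> exact_top n m d"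
    using g zG unfolding isotypic_def by blast
  have pz: "(\<Prod>u\<in>fvars n m. z u powi lk e u) = w powi lk e v" for e
  proof -
    have "(\<Prod>u\<in>fvars n m. z u powi lk e u) = (\<Prod>u\<in>fvars n m. if u = v then w powi lk e v else 1)"
      by (rule prod.cong) (auto simp: z_def)
    then show ?thesis using v by simp
  qed
  have chiz: "chi n m d \<alpha> \<beta> z = w powi lk (E0 n m d \<alpha> \<beta>) v" by (simp add: chi_prod pz)
  define c0 where "c0 = lk (E0 n m d \<alpha> \<beta>) v mod int d"
  define r0 where "r0 = nat c0"
  have c0: "0 \<le> c0" "c0 < int d" using d1 unfolding c0_def by simp_all
  have r0: "r0 < d" "int r0 = c0" using c0 unfolding r0_def by auto
  have chiz': "chi n m d \<alpha> \<beta> z = w ^ r0"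
    unfolding chiz powi_mod[OF w(2) w(1) d1] r0_def c0_def ..
  define Cr where "Cr r e \<longleftrightarrow> lk e v mod int d = int r" for r e
  have part: "Pf (Cr r) g \<in> exact_top n m d" if r: "r < d" "r \<noteq> r0" for r
  proof -
    have per: "Cr r (k + e) = Cr r e" if "\<forall>u. int d dvd lk k u" for k e
      unfolding Cr_def using periodic_mod[OF that] by simp
    have PY: "Pf (Cr r) (gact n m z g - scal (cst (chi n m d \<alpha> \<beta> z)) g) \<in> exact_top n m d"
      by (rule ET_Pf[OF per Y]) blast
    have eq: "Pf (Cr r) (gact n m z g - scal (cst (chi n m d \<alpha> \<beta> z)) g) = scal (cst (w ^ r - w ^ r0)) (Pf (Cr r) g)"
    proof (rule poly_mapping_eqI)
      fix e
      show "lk (Pf (Cr r) (gact n m z g - scal (cst (chi n m d \<alpha> \<beta> z)) g)) e = lk (scal (cst (w ^ r - w ^ r0)) (Pf (Cr r) g)) e"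
      proof (cases "Cr r e")
        case True
        then have "w powi lk e v = w ^ r" unfolding Cr_def powi_mod[OF w(2) w(1) d1] by simp
        then show ?thesis using True
          by (simp add: lookup_Pf lookup_minus lookup_gact lookup_scal pz chiz' cst_diff[symmetric] algebra_simps)
      next
        case False
        then show ?thesis by (simp add: lookup_Pf lookup_minus lookup_gact lookup_scal)
      qed
    qed
    have nz: "w ^ r - w ^ r0 \<noteq> 0" using w(3)[OF r(1) r0(1)] r(2) by auto
    have "Pf (Cr r) g = scal (cst (1 / (w ^ r - w ^ r0))) (Pf (Cr r) (gact n m z g - scal (cst (chi n m d \<alpha> \<beta> z)) g))"
      unfolding eq scal_scal cst_mult using nz by simp
    then show ?thesis using ET_scal[OF OS_cst PY] by simp
  qed
  have "g - Pf (\<lambda>e. lk e v mod int d = c0) g = (\<Sum>r\<in>{..<d} - {r0}. Pf (Cr r) g)"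
  proof (rule poly_mapping_eqI)
    fix e
    define x where "x = lk e v mod int d"
    have x: "0 \<le> x" "x < int d" using d1 unfolding x_def by simp_all
    have "(\<Sum>r\<in>{..<d} - {r0}. lk (Pf (Cr r) g) e) = (\<Sum>r\<in>{..<d} - {r0}. if r = nat x then lk g e else 0)"
      by (rule sum.cong) (auto simp: lookup_Pf Cr_def x_def[symmetric] x)
    also have "... = (if nat x \<in> {..<d} - {r0} then lk g e else 0)" by simp
    also have "... = (if x = c0 then 0 else lk g e)"
      using x r0 by auto
    finally show "lk (g - Pf (\<lambda>e. lk e v mod int d = c0) g) e = lk (\<Sum>r\<in>{..<d} - {r0}. Pf (Cr r) g) e"
      by (simp add: lookup_minus lookup_Pf lookup_sum x_def)
  qed
  moreover have "(\<Sum>r\<in>{..<d} - {r0}. Pf (Cr r) g) \<in> exact_top n m d"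
    by (rule ET_sum) (use part in auto)
  ultimately show ?thesis unfolding c0_def by simp
qed

lemma proj_all:
  assumes g: "g \<in> isotypic n m d \<alpha> \<beta>" and d1: "d \<ge> 1" and A: "finite A" "A \<subseteq> fvars n m"
  shows "g - Pf (\<lambda>e. \<forall>v\<in>A. lk e v mod int d = lk (E0 n m d \<alpha> \<beta>) v mod int d) g \<in> exact_top n m d"
  using A
proof (induction A rule: finite_induct)
  case empty
  then show ?case by (simp add: Pf_True)
next
  case (insert v A)
  let ?CA = "\<lambda>e. \<forall>v\<in>A. lk e v mod int d = lk (E0 n m d \<alpha> \<beta>) v mod int d"
  let ?Cv = "\<lambda>e. lk e v mod int d = lk (E0 n m d \<alpha> \<beta>) v mod int d"
  have per: "?CA (k + e) = ?CA e" if "\<forall>u. int d dvd lk k u" for k e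
    using periodic_mod[OF that] by simp
  have 1: "g - Pf ?CA g \<in> exact_top n m d" using insert by simp
  have 2: "Pf ?CA (g - Pf ?Cv g) \<in> exact_top n m d"
    by (rule ET_Pf[OF per proj_one[OF g _ d1]]) (use insert in auto)
  have eq: "g - Pf (\<lambda>e. \<forall>v'\<in>insert v A. lk e v' mod int d = lk (E0 n m d \<alpha> \<beta>) v' mod int d) g
      = (g - Pf ?CA g) + Pf ?CA (g - Pf ?Cv g)"
    by (rule poly_mapping_eqI) (simp add: lookup_Pf lookup_minus lookup_add)
  show ?case unfolding eq by (rule ET_add[OF 1 2])
qed

lemma in_Ex:
  assumes S: "SUPP n m e" and C: "\<forall>v\<in>fvars n m. lk e v mod int d = lk (E0 n m d \<alpha> \<beta>) v mod int d"
  shows "\<exists>k l. e = Ex n m d \<alpha> \<beta> k l"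
proof (intro exI)
  let ?k = "\<lambda>i. (lk e (Inl i) - intmul d (\<alpha> i)) div int d"
  let ?l = "\<lambda>j. (lk e (Inr j) + intmul d (\<beta> j)) div int d"
  show "e = Ex n m d \<alpha> \<beta> ?k ?l"
  proof (rule poly_mapping_eqI)
    fix v
    show "lk e v = lk (Ex n m d \<alpha> \<beta> ?k ?l) v"
    proof (cases "v \<in> fvars n m")
      case False
      then have "lk e v = 0" using S unfolding SUPP_def by blast
      then show ?thesis using False by (cases v) (auto simp: lookup_Ex_Inl lookup_Ex_Inr fvars_def)
    next
      case True
      then have "int d dvd (lk e v - lk (E0 n m d \<alpha> \<beta>) v)" using C by (simp add: mod_eq_dvd_iff)
      then show ?thesis using True
        by (cases v) (auto simp: lookup_Ex_Inl lookup_Ex_Inr fvars_def dvd_mult_div_cancel)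
    qed
  qed
qed

theorem proposition2p13:
  fixes n m d :: nat and \<alpha> \<beta> :: "nat \<Rightarrow> rat"
  assumes "m \<le> n" and "1 \<le> n"
    and "\<forall>i j. 1 \<le> i \<and> i \<le> j \<and> j \<le> n \<longrightarrow> \<alpha> i \<le> \<alpha> j"
    and "\<forall>i j. 1 \<le> i \<and> i \<le> j \<and> j \<le> m \<longrightarrow> \<beta> i \<le> \<beta> j"
    and "\<alpha> 1 = 0"
    and "\<forall>i\<in>{1..n}. \<forall>j\<in>{1..m}. \<alpha> i - \<beta> j \<notin> \<int>"
    and "1 \<le> d"
    and "\<forall>i\<in>{1..n}. of_nat d * \<alpha> i \<in> \<int>"
    and "\<forall>j\<in>{1..m}. of_nat d * \<beta> j \<in> \<int>"
  shows "cyclic_vector n m d \<alpha> \<beta> (omega n m d \<alpha> \<beta>)"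
proof -
  note nonres = assms(6)
  have d1: "d \<ge> 1" using assms(7) by simp
  have dpos: "(of_nat d :: rat) \<noteq> 0" using d1 by simp
  have aint: "of_int (intmul d (\<alpha> i)) = of_nat d * \<alpha> i" if "i \<in> {1..n}" for i
    using intmul_eq assms(8) that by blast
  have bint: "of_int (intmul d (\<beta> j)) = of_nat d * \<beta> j" if "j \<in> {1..m}" for j
    using intmul_eq assms(9) that by blast
  have nd_b: "\<not> int d dvd intmul d (\<beta> j)" if j: "j \<in> {1..m}" for j
  proof
    assume "int d dvd intmul d (\<beta> j)"
    then obtain t where t: "intmul d (\<beta> j) = int d * t" by blast
    have "of_nat d * \<beta> j = of_nat d * (of_int t :: rat)"
      using bint[OF j] t by (metis of_int_mult of_int_of_nat_eq)
    then have "\<beta> j = of_int t" using dpos by simp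
    then have "\<alpha> 1 - \<beta> j \<in> \<int>" using assms(5) by simp
    moreover have "1 \<in> {1..n}" using assms(2) by simp
    ultimately show False using nonres j by blast
  qed
  have nd_ab: "\<not> int d dvd (intmul d (\<alpha> i) - intmul d (\<beta> j))" if i: "i \<in> {2..n}" and j: "j \<in> {1..m}" for i j
  proof
    assume "int d dvd (intmul d (\<alpha> i) - intmul d (\<beta> j))"
    then obtain t where t: "intmul d (\<alpha> i) - intmul d (\<beta> j) = int d * t" by blast
    have i1: "i \<in> {1..n}" using i by simp
    have "of_nat d * (\<alpha> i - \<beta> j) = of_nat d * (of_int t :: rat)"
      using aint[OF i1] bint[OF j] arg_cong[OF t, of "of_int :: int \<Rightarrow> rat"] by (simp add: algebra_simps)
    then have "\<alpha> i - \<beta> j = of_int t" using dpos by simp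
    then have "\<alpha> i - \<beta> j \<in> \<int>" by simp
    then show False using nonres i1 j by blast
  qed
  have allS: "\<forall>c\<in>OS n m. sg (Ex n m d \<alpha> \<beta> k l) c \<in> Spn n m d \<alpha> \<beta>" for k l
    by (rule all_Spn[OF d1 nd_b nd_ab])
  have main: "g \<in> Spn n m d \<alpha> \<beta>" if g: "g \<in> isotypic n m d \<alpha> \<beta>" for g
  proof -
    let ?C = "\<lambda>e. \<forall>v\<in>fvars n m. lk e v mod int d = lk (E0 n m d \<alpha> \<beta>) v mod int d"
    have gOU: "g \<in> OU n m" using g unfolding isotypic_def by blast
    have 1: "g - Pf ?C g \<in> Spn n m d \<alpha> \<beta>"
      by (rule Spn_ET, rule proj_all[OF g d1]) simp_all
    have 2: "Pf ?C g \<in> Spn n m d \<alpha> \<beta>"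
    proof -
      have "(\<Sum>e\<in>Poly_Mapping.keys (Pf ?C g). sg e (lk (Pf ?C g) e)) \<in> Spn n m d \<alpha> \<beta>"
      proof (rule Spn_sum)
        fix e assume e: "e \<in> Poly_Mapping.keys (Pf ?C g)"
        then have Ce: "?C e" and eg: "e \<in> Poly_Mapping.keys g" by (auto simp: in_keys_iff lookup_Pf split: if_splits)
        have "SUPP n m e" using OU_keys[OF gOU eg] .
        then obtain k l where kl: "e = Ex n m d \<alpha> \<beta> k l" using in_Ex Ce by blast
        have "lk (Pf ?C g) e \<in> OS n m" using OU_coeff[OF gOU] Ce by (simp add: lookup_Pf)
        then show "sg e (lk (Pf ?C g) e) \<in> Spn n m d \<alpha> \<beta>" using allS kl by blast
      qed
      then show ?thesis using monomial_sum[of "Pf ?C g"] by simp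
    qed
    show ?thesis using Spn_add[OF 1 2] by simp
  qed
  show ?thesis
    unfolding cyclic_vector_def
  proof (intro conjI ballI)
    show "omega n m d \<alpha> \<beta> \<in> isotypic n m d \<alpha> \<beta>" by (rule omega_iso)
    fix g assume "g \<in> isotypic n m d \<alpha> \<beta>"
    then show "\<exists>K c. (\<forall>k\<le>K. c k \<in> OS n m) \<and>
        g - (\<Sum>k\<le>K. scal (c k) ((GM n m d ^^ k) (omega n m d \<alpha> \<beta>))) \<in> exact_top n m d"
      using main unfolding Spn_def by blast
  qed
qed

end
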